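(* (Completeness.) For every finite multiset $\Gamma$ of ILL formulae and every ILL formula $\varphi$: if $\Gamma\Vdash\varphi$ (i.e. $\Gamma\Vdash^{\varnothing}_{\mathcal{B}}\varphi$ for every base $\mathcal{B}$), then $\Gamma\vdash\varphi$ is derivable in $\mathrm{N_{ILL}}$.
   Context: Fix a set $\mathbb{A}$ of propositional atoms. ILL formulae: $\phi ::= p\in\mathbb{A} \mid \top \mid 0 \mid 1 \mid \phi\multimap\phi \mid \phi\otimes\phi \mid \phi\,\&\,\phi \mid \phi\oplus\phi \mid\ !\phi$. All multisets are finite; "$\Gamma,\Delta$" denotes multiset union. Natural deduction $\mathrm{N_{ILL}}$: $\Gamma\vdash\varphi$ is defined inductively by: (Ax) $\varphi\vdash\varphi$; ($\multimap$I) from $\Gamma,\phi\vdash\psi$ infer $\Gamma\vdash\phi\multimap\psi$; ($\multimap$E) from $\Gamma\vdash\phi\multimap\psi$ and $\Delta\vdash\phi$ infer $\Gamma,\Delta\vdash\psi$; ($\otimes$I) from $\Gamma\vdash\phi$, $\Delta\vdash\psi$ infer $\Gamma,\Delta\vdash\phi\otimes\psi$; ($\otimes$E) from $\Gamma\vdash\phi\otimes\psi$ and $\Delta,\phi,\psi\vdash\chi$ infer $\Gamma,\Delta\vdash\chi$; ($1$I) $\vdash 1$; ($1$E) from $\Gamma\vdash 1$, $\Delta\vdash\phi$ infer $\Gamma,\Delta\vdash\phi$; ($\&$I) from $\Gamma\vdash\phi$, $\Gamma\vdash\psi$ infer $\Gamma\vdash\phi\&\psi$; ($\&$E) from $\Gamma\vdash\phi\&\psi$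 infer $\Gamma\vdash\phi$ and infer $\Gamma\vdash\psi$; ($\oplus$I) from $\Gamma\vdash\phi$ (or $\Gamma\vdash\psi$) infer $\Gamma\vdash\phi\oplus\psi$; ($\oplus$E) from $\Gamma\vdash\phi\oplus\psi$, $\Delta,\phi\vdash\chi$, $\Delta,\psi\vdash\chi$ infer $\Gamma,\Delta\vdash\chi$; ($\top$I) for $n\ge0$, from $\Gamma_i\vdash\phi_i$ ($i=1..n$) infer $\Gamma_1,\dots,\Gamma_n\vdash\top$; ($0$E) for $n\ge 0$, from $\Gamma_i\vdash\phi_i$ ($i=1..n$) and $\Delta\vdash 0$ infer $\Gamma_1,\dots,\Gamma_n,\Delta\vdash\chi$; (Prom$_n$) for $n\ge0$, from $\Gamma_i\vdash\,!\psi_i$ ($i=1..n$) and $!\psi_1,\dots,!\psi_n\vdash\phi$ infer $\Gamma_1,\dots,\Gamma_n\vdash\,!\phi$; (Der) from $\Gamma\vdash\,!\phi$, $\Delta,\phi\vdash\psi$ infer $\Gamma,\Delta\vdash\psi$; (Wk) from $\Gamma\vdash\,!\phi$, $\Delta\vdash\psi$ infer $\Gamma,\Delta\vdash\psi$; (Ctr) from $\Gamma\vdash\,!\phi$, $\Delta,!\phi,!\phi\vdash\psi$ infer $\Gamma,\Delta\vdash\psi$. Atomic rules and bases: an atomic sequent is $P\Rightarrow p$ with $P$ a multiset of atoms, $p$ an atom. An atomic box is a multiset of atomic sequents. An atomic rule is a triple $\langle\mathbf{A},\mathbf{S},p\rangle$ with $\mathbf{A}$ a multiset of atomic boxes, $\mathbf{S}$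 an atomic box, $p$ an atom. A base is a set of atomic rules. An atom $p$ is persistent in $\mathcal{B}$ if some $\langle\varnothing,\mathbf{S},p\rangle\in\mathcal{B}$ has $\mathbf{S}\neq\varnothing$. Derivability $\vdash_{\mathcal{B}}$ between atomic multisets and atoms is defined inductively: (Ref) $p\vdash_{\mathcal{B}}p$; (App) if $\langle\mathbf{A},\mathbf{S},p\rangle\in\mathcal{B}$ with $\mathbf{A}=\{\mathbf{T}_1,\dots,\mathbf{T}_m\}$, and there are atomic multisets $C_1,\dots,C_n$ ($n\ge m$) and a multiset $D=\{d_{m+1},\dots,d_n\}$ of atoms persistent in $\mathcal{B}$ such that $C_i,Q\vdash_{\mathcal{B}}q$ for every $i\le m$ and every $Q\Rightarrow q\in\mathbf{T}_i$, $C_j\vdash_{\mathcal{B}}d_j$ for every $m<j\le n$, and $D,U\vdash_{\mathcal{B}}v$ for every $U\Rightarrow v\in\mathbf{S}$, then $C_1,\dots,C_n\vdash_{\mathcal{B}}p$. Support $\Vdash^L_{\mathcal{B}}$ (base $\mathcal{B}$, atomic multiset $L$), defined by induction on formulae: $\Vdash^L_{\mathcal{B}}p$ iff $L\vdash_{\mathcal{B}}p$; $\Vdash^L_{\mathcal{B}}\varphi\multimap\psi$ iff $\varphi\Vdash^L_{\mathcal{B}}\psi$; $\Vdash^L_{\mathcal{B}}\varphi\otimes\psi$ iff for all $\mathcal{C}\supseteq\mathcal{B}$, atomic multisets $K$, atoms $p$: if $\varphi,\psi\Vdash^K_{\mathcal{C}}p$ then $\Vdash^{L,K}_{\mathcal{C}}p$;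 $\Vdash^L_{\mathcal{B}}1$ iff for all $\mathcal{C}\supseteq\mathcal{B}$, $K$, $p$: if $\Vdash^K_{\mathcal{C}}p$ then $\Vdash^{L,K}_{\mathcal{C}}p$; $\Vdash^L_{\mathcal{B}}\varphi\&\psi$ iff $\Vdash^L_{\mathcal{B}}\varphi$ and $\Vdash^L_{\mathcal{B}}\psi$; $\Vdash^L_{\mathcal{B}}\varphi\oplus\psi$ iff for all $\mathcal{C}\supseteq\mathcal{B}$, $K$, $p$: if $\varphi\Vdash^K_{\mathcal{C}}p$ and $\psi\Vdash^K_{\mathcal{C}}p$ then $\Vdash^{L,K}_{\mathcal{C}}p$; $\Vdash^L_{\mathcal{B}}0$ iff $\Vdash^{L,K}_{\mathcal{B}}p$ for all atoms $p$ and atomic multisets $K$; $\Vdash^L_{\mathcal{B}}\top$ always; $\Vdash^L_{\mathcal{B}}!\varphi$ iff for all $\mathcal{C}\supseteq\mathcal{B}$, $K$, $p$: if (for all $\mathcal{D}\supseteq\mathcal{C}$, $\Vdash^{\varnothing}_{\mathcal{D}}\varphi$ implies $\Vdash^K_{\mathcal{D}}p$) then $\Vdash^{L,K}_{\mathcal{C}}p$. For nonempty multisets: $\Vdash^L_{\mathcal{B}}\Gamma,\Delta$ iff $L=K,M$ for some $K,M$ with $\Vdash^K_{\mathcal{B}}\Gamma$ and $\Vdash^M_{\mathcal{B}}\Delta$. For a nonempty antecedent written as $!\Delta,\Theta$, where $!\Delta$ collects the formulae whose top-level connective is $!$ (with $\Delta$ the formulae under those $!$) and $\Theta$ contains none: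 $!\Delta,\Theta\Vdash^L_{\mathcal{B}}\varphi$ iff for all $\mathcal{C}\supseteq\mathcal{B}$ and atomic $K$, if $\Vdash^{\varnothing}_{\mathcal{C}}\delta$ for every $\delta\in\Delta$ and $\Vdash^K_{\mathcal{C}}\Theta$ then $\Vdash^{L,K}_{\mathcal{C}}\varphi$ (when $\Theta$ is empty, $K$ is empty). An empty antecedent: $\varnothing\Vdash^L_{\mathcal{B}}\varphi$ means $\Vdash^L_{\mathcal{B}}\varphi$. A sequent $(\Gamma:\varphi)$ is valid, written $\Gamma\Vdash\varphi$, iff $\Gamma\Vdash^{\varnothing}_{\mathcal{B}}\varphi$ for all bases $\mathcal{B}$. *)

theory Defs
  imports Main "HOL-Library.Multiset"
begin

datatype 'a form =
    Atom 'a
  | Top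
  | Zero
  | One
  | Lolli "'a form" "'a form"
  | Tensor "'a form" "'a form"
  | With "'a form" "'a form"
  | Plus "'a form" "'a form"
  | Bang "'a form"

inductive nd :: "'a form multiset \<Rightarrow> 'a form \<Rightarrow> bool" where
  Ax: "nd {#\<phi>#} \<phi>"
| LolliI: "nd (add_mset \<phi> \<Gamma>) \<psi> \<Longrightarrow> nd \<Gamma> (Lolli \<phi> \<psi>)"
| LolliE: "nd \<Gamma> (Lolli \<phi> \<psi>) \<Longrightarrow> nd \<Delta> \<phi> \<Longrightarrow> nd (\<Gamma> + \<Delta>) \<psi>"
| TensorI: "nd \<Gamma> \<phi> \<Longrightarrow> nd \<Delta> \<psi> \<Longrightarrow> nd (\<Gamma> + \<Delta>) (Tensor \<phi> \<psi>)"
| TensorE: "nd \<Gamma> (Tensor \<phi> \<psi>) \<Longrightarrow> nd (\<Delta> + {#\<phi>, \<psi>#}) \<chi> \<Longrightarrow> nd (\<Gamma> + \<Delta>) \<chi>"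
| OneI: "nd {#} One"
| OneE: "nd \<Gamma> One \<Longrightarrow> nd \<Delta> \<phi> \<Longrightarrow> nd (\<Gamma> + \<Delta>) \<phi>"
| WithI: "nd \<Gamma> \<phi> \<Longrightarrow> nd \<Gamma> \<psi> \<Longrightarrow> nd \<Gamma> (With \<phi> \<psi>)"
| WithE1: "nd \<Gamma> (With \<phi> \<psi>) \<Longrightarrow> nd \<Gamma> \<phi>"
| WithE2: "nd \<Gamma> (With \<phi> \<psi>) \<Longrightarrow> nd \<Gamma> \<psi>"
| PlusI1: "nd \<Gamma> \<phi> \<Longrightarrow> nd \<Gamma> (Plus \<phi> \<psi>)"
| PlusI2: "nd \<Gamma> \<psi> \<Longrightarrow> nd \<Gamma> (Plus \<phi> \<psi>)"
| PlusE: "nd \<Gamma> (Plus \<phi> \<psi>) \<Longrightarrow> nd (add_mset \<phi> \<Delta>) \<chi> \<Longrightarrow> nd (add_mset \<psi> \<Delta>) \<chi>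
          \<Longrightarrow> nd (\<Gamma> + \<Delta>) \<chi>"
  \<comment> \<open>(TopI): premises are the list ps of pairs (Gamma_i, phi_i), n = length ps\<close>
| TopI: "\<forall>x\<in>set ps. nd (fst x) (snd x) \<Longrightarrow> nd (sum_list (map fst ps)) Top"
| ZeroE: "\<forall>x\<in>set ps. nd (fst x) (snd x) \<Longrightarrow> nd \<Delta> Zero
          \<Longrightarrow> nd (sum_list (map fst ps) + \<Delta>) \<chi>"
  \<comment> \<open>(Prom_n): ps is the list of pairs (Gamma_i, psi_i)\<close>
| Prom: "\<forall>x\<in>set ps. nd (fst x) (Bang (snd x)) \<Longrightarrow> nd (mset (map (\<lambda>x. Bang (snd x)) ps)) \<phi>
          \<Longrightarrow> nd (sum_list (map fst ps)) (Bang \<phi>)"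
| Der: "nd \<Gamma> (Bang \<phi>) \<Longrightarrow> nd (add_mset \<phi> \<Delta>) \<psi> \<Longrightarrow> nd (\<Gamma> + \<Delta>) \<psi>"
| Wk: "nd \<Gamma> (Bang \<phi>) \<Longrightarrow> nd \<Delta> \<psi> \<Longrightarrow> nd (\<Gamma> + \<Delta>) \<psi>"
| Ctr: "nd \<Gamma> (Bang \<phi>) \<Longrightarrow> nd (\<Delta> + {#Bang \<phi>, Bang \<phi>#}) \<psi> \<Longrightarrow> nd (\<Gamma> + \<Delta>) \<psi>"

type_synonym 'a aseq = "'a multiset \<times> 'a"           \<comment> \<open>P => p\<close>
type_synonym 'a abox = "'a aseq multiset"
type_synonym 'a arule = "'a abox multiset \<times> 'a abox \<times> 'a"
type_synonym 'a base = "'a arule set"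

definition persistent :: "'a base \<Rightarrow> 'a \<Rightarrow> bool" where
  "persistent \<B> p \<longleftrightarrow> (\<exists>S. ({#}, S, p) \<in> \<B> \<and> S \<noteq> {#})"

text \<open>(App): TC lists the pairs (T_i, C_i) for i = 1..m (so the boxes T_i enumerate A),
  DC lists the pairs (d_j, C_j) for j = m+1..n.\<close>
inductive aderiv :: "'a base \<Rightarrow> 'a multiset \<Rightarrow> 'a \<Rightarrow> bool" for \<B> where
  Ref: "aderiv \<B> {#p#} p"
| App: "(A, S, p) \<in> \<B> \<Longrightarrow> mset (map fst TC) = A
        \<Longrightarrow> (\<forall>d\<in>set DC. persistent \<B> (fst d))
        \<Longrightarrow> (\<forall>x\<in>set TC. \<forall>y\<in># fst x. aderiv \<B> (snd x + fst y) (snd y))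
        \<Longrightarrow> (\<forall>d\<in>set DC. aderiv \<B> (snd d) (fst d))
        \<Longrightarrow> (\<forall>y\<in># S. aderiv \<B> (mset (map fst DC) + fst y) (snd y))
        \<Longrightarrow> aderiv \<B> (sum_list (map snd TC) + sum_list (map snd DC)) p"

text \<open>supp B L phi  means  |-^L_B phi.  For a single antecedent formula theta, the
  condition "theta contributes K at base C" is: if theta = !delta then K is empty and
  |-^{}_C delta, otherwise |-^K_C theta (this is the clause for !Delta, Theta unfolded).\<close>

fun supp :: "'a base \<Rightarrow> 'a multiset \<Rightarrow> 'a form \<Rightarrow> bool" where
  "supp \<B> L (Atom p) = aderiv \<B> L p"
| "supp \<B> L (Lolli \<phi> \<psi>) =
     (\<forall>\<C> K. \<B> \<subseteq> \<C> \<longrightarrow>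
        (case \<phi> of Bang \<delta> \<Rightarrow> K = {#} \<and> supp \<C> {#} \<delta> | _ \<Rightarrow> supp \<C> K \<phi>)
        \<longrightarrow> supp \<C> (L + K) \<psi>)"
| "supp \<B> L (Tensor \<phi> \<psi>) =
     (\<forall>\<C> K p. \<B> \<subseteq> \<C> \<longrightarrow>
        (\<forall>\<D> K1 K2. \<C> \<subseteq> \<D> \<longrightarrow>
           (case \<phi> of Bang \<delta> \<Rightarrow> K1 = {#} \<and> supp \<D> {#} \<delta> | _ \<Rightarrow> supp \<D> K1 \<phi>) \<longrightarrow>
           (case \<psi> of Bang \<delta> \<Rightarrow> K2 = {#} \<and> supp \<D> {#} \<delta> | _ \<Rightarrow> supp \<D> K2 \<psi>) \<longrightarrow>
           aderiv \<D> (K + K1 + K2) p)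
        \<longrightarrow> aderiv \<C> (L + K) p)"
| "supp \<B> L One = (\<forall>\<C> K p. \<B> \<subseteq> \<C> \<longrightarrow> aderiv \<C> K p \<longrightarrow> aderiv \<C> (L + K) p)"
| "supp \<B> L (With \<phi> \<psi>) = (supp \<B> L \<phi> \<and> supp \<B> L \<psi>)"
| "supp \<B> L (Plus \<phi> \<psi>) =
     (\<forall>\<C> K p. \<B> \<subseteq> \<C> \<longrightarrow>
        (\<forall>\<D> K1. \<C> \<subseteq> \<D> \<longrightarrow>
           (case \<phi> of Bang \<delta> \<Rightarrow> K1 = {#} \<and> supp \<D> {#} \<delta> | _ \<Rightarrow> supp \<D> K1 \<phi>) \<longrightarrow>
           aderiv \<D> (K + K1) p) \<longrightarrow>
        (\<forall>\<D> K1. \<C> \<subseteq> \<D> \<longrightarrow>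
           (case \<psi> of Bang \<delta> \<Rightarrow> K1 = {#} \<and> supp \<D> {#} \<delta> | _ \<Rightarrow> supp \<D> K1 \<psi>) \<longrightarrow>
           aderiv \<D> (K + K1) p)
        \<longrightarrow> aderiv \<C> (L + K) p)"
| "supp \<B> L Zero = (\<forall>p K. aderiv \<B> (L + K) p)"
| "supp \<B> L Top = True"
| "supp \<B> L (Bang \<phi>) =
     (\<forall>\<C> K p. \<B> \<subseteq> \<C> \<longrightarrow>
        (\<forall>\<D>. \<C> \<subseteq> \<D> \<longrightarrow> supp \<D> {#} \<phi> \<longrightarrow> aderiv \<D> K p)
        \<longrightarrow> aderiv \<C> (L + K) p)"

definition piece :: "'a base \<Rightarrow> 'a form \<Rightarrow> 'a multiset \<Rightarrow> bool" where
  "piece \<C> \<theta> K = (case \<theta> of Bang \<delta> \<Rightarrow> K = {#} \<and> supp \<C> {#} \<delta> | _ \<Rightarrow> supp \<C> K \<theta>)"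

text \<open>Gamma |-^L_B phi for a multiset antecedent: empty antecedent means |-^L_B phi;
  otherwise quantify over extensions C and over an enumeration ks of Gamma paired with
  the multisets each formula contributes (bang formulas contribute nothing).\<close>
definition ante_supp :: "'a base \<Rightarrow> 'a form multiset \<Rightarrow> 'a multiset \<Rightarrow> 'a form \<Rightarrow> bool" where
  "ante_supp \<B> \<Gamma> L \<phi> =
     (if \<Gamma> = {#} then supp \<B> L \<phi>
      else (\<forall>\<C> ks. \<B> \<subseteq> \<C> \<longrightarrow> mset (map fst ks) = \<Gamma> \<longrightarrow>
              (\<forall>x\<in>set ks. piece \<C> (fst x) (snd x)) \<longrightarrow>
              supp \<C> (L + sum_list (map snd ks)) \<phi>))"

definition valid :: "'a form multiset \<Rightarrow> 'a form \<Rightarrow> bool" where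
  "valid \<Gamma> \<phi> = (\<forall>\<B>. ante_supp \<B> \<Gamma> {#} \<phi>)"

end

theory Submission imports Defs begin

lemmas supp_simps = supp.simps[folded piece_def]

fun isbang :: "'a form \<Rightarrow> bool" where
  "isbang (Bang _) = True"
| "isbang _ = False"

lemma piece_nb: "\<not> isbang \<theta> \<Longrightarrow> piece C \<theta> K = supp C K \<theta>"
  by (cases \<theta>) (auto simp: piece_def)

lemma piece_b: "piece C (Bang \<delta>) K = (K = {#} \<and> supp C {#} \<delta>)"
  by (simp add: piece_def)

lemma persistent_mono: "persistent B p \<Longrightarrow> B \<subseteq> C \<Longrightarrow> persistent C p"
  unfolding persistent_def by blast

lemma aderiv_mono: "aderiv B K p \<Longrightarrow> B \<subseteq> C \<Longrightarrow> aderiv C K p"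
proof (induction rule: aderiv.induct)
  case (Ref p) show ?case by (rule aderiv.Ref)
next
  case (App A S p TC DC)
  show ?case
    by (rule aderiv.App[where TC=TC and DC=DC]) (use App in \<open>auto intro: persistent_mono\<close>)
qed

lemma supp_mono: "supp B L \<phi> \<Longrightarrow> B \<subseteq> C \<Longrightarrow> supp C L \<phi>"
proof (induction \<phi> arbitrary: B L)
  case (Atom x) then show ?case by (auto intro: aderiv_mono)
next
  case Zero then show ?case by (auto intro: aderiv_mono)
next
  case (With \<phi>1 \<phi>2) then show ?case by auto
qed (simp_all only: supp_simps; meson order_trans)+

lemma piece_mono: "piece B \<theta> K \<Longrightarrow> B \<subseteq> C \<Longrightarrow> piece C \<theta> K"
  by (cases \<theta>) (auto simp: piece_def intro: supp_mono aderiv_mono)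

lemma supp_bang_intro: "supp B {#} \<delta> \<Longrightarrow> supp B {#} (Bang \<delta>)"
  unfolding supp_simps by (auto intro: supp_mono)

definition bx :: "'a \<Rightarrow> 'a abox" where "bx a = {#({#}, a)#}"

lemma bx_all[simp]: "(\<forall>y\<in>#bx a. P y) = P ({#}, a)" by (simp add: bx_def)

lemma app0: "({#}, {#}, p) \<in> B \<Longrightarrow> aderiv B {#} p"
  using aderiv.App[where \<B>=B and A="{#}" and S="{#}" and p=p and TC="[]" and DC="[]"] by simp

lemma app1: "({#T#}, {#}, p) \<in> B \<Longrightarrow> \<forall>y\<in>#T. aderiv B (C + fst y) (snd y) \<Longrightarrow> aderiv B C p"
  using aderiv.App[where \<B>=B and A="{#T#}" and S="{#}" and p=p and TC="[(T,C)]" and DC="[]"] by simp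

lemma app2: "({#T1, T2#}, {#}, p) \<in> B \<Longrightarrow> \<forall>y\<in>#T1. aderiv B (C1 + fst y) (snd y)
   \<Longrightarrow> \<forall>y\<in>#T2. aderiv B (C2 + fst y) (snd y) \<Longrightarrow> aderiv B (C1 + C2) p"
  using aderiv.App[where \<B>=B and A="{#T1,T2#}" and S="{#}" and p=p and TC="[(T1,C1),(T2,C2)]" and DC="[]"] by simp

lemma sum_list_single: "sum_list (map (\<lambda>q. {#q#}) xs) = mset xs"
  by (induction xs) auto

lemma appQ: "(add_mset T0 (image_mset bx Q), {#}, p) \<in> B \<Longrightarrow> \<forall>y\<in>#T0. aderiv B (C0 + fst y) (snd y)
   \<Longrightarrow> aderiv B (C0 + Q) p"
proof -
  assume r: "(add_mset T0 (image_mset bx Q), {#}, p) \<in> B" and h: "\<forall>y\<in>#T0. aderiv B (C0 + fst y) (snd y)"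
  obtain xs where xs: "mset xs = Q" using ex_mset by blast
  have "aderiv B (C0 + sum_list (map (\<lambda>q. {#q#}) xs)) p"
    using aderiv.App[OF r, where TC="(T0, C0) # map (\<lambda>q. (bx q, {#q#})) xs" and DC="[]"] h xs
    by (simp add: comp_def aderiv.Ref)
  thus ?thesis using xs by (simp add: sum_list_single)
qed

lemma appTop: "(image_mset bx Q, {#}, p) \<in> B \<Longrightarrow> aderiv B Q p"
proof -
  assume r: "(image_mset bx Q, {#}, p) \<in> B"
  obtain xs where xs: "mset xs = Q" using ex_mset by blast
  have "aderiv B (sum_list (map (\<lambda>q. {#q#}) xs)) p"
    using aderiv.App[OF r, where TC="map (\<lambda>q. (bx q, {#q#})) xs" and DC="[]"] xs
    by (simp add: comp_def aderiv.Ref)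
  thus ?thesis using xs by (simp add: sum_list_single)
qed

lemma appP: "({#}, {#({#}, a)#}, c) \<in> B \<Longrightarrow> aderiv B {#} a \<Longrightarrow> aderiv B {#} c"
  using aderiv.App[where \<B>=B and A="{#}" and S="{#({#}, a)#}" and p=c and TC="[]" and DC="[]"] by simp

lemma rep_plus: "replicate_mset (m + n) x = replicate_mset m x + replicate_mset n x"
  by (induction m) auto

lemma sum_list_plus_b:
  "sum_list (map (\<lambda>x. f x + {#b#}) xs) = sum_list (map f xs) + replicate_mset (length xs) b"
  by (induction xs) auto

fun sub :: "'a form \<Rightarrow> 'a form set" where
  "sub (Lolli a b) = insert (Lolli a b) (sub a \<union> sub b)"
| "sub (Tensor a b) = insert (Tensor a b) (sub a \<union> sub b)"
| "sub (With a b) = insert (With a b) (sub a \<union> sub b)"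
| "sub (Plus a b) = insert (Plus a b) (sub a \<union> sub b)"
| "sub (Bang a) = insert (Bang a) (sub a)"
| "sub x = {x}"

lemma self_sub: "\<chi> \<in> sub \<chi>" by (cases \<chi>) auto

lemma finite_sub: "finite (sub \<chi>)" by (induction \<chi>) auto

inductive_set NB :: "('a form \<Rightarrow> 'a) \<Rightarrow> 'a form set \<Rightarrow> 'a arule set" for fl X where
  LI: "Lolli \<phi> \<psi> \<in> X \<Longrightarrow> ({#{#({#fl \<phi>#}, fl \<psi>)#}#}, {#}, fl (Lolli \<phi> \<psi>)) \<in> NB fl X"
| LE: "Lolli \<phi> \<psi> \<in> X \<Longrightarrow> ({#bx (fl (Lolli \<phi> \<psi>)), bx (fl \<phi>)#}, {#}, fl \<psi>) \<in> NB fl X"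
| TI: "Tensor \<phi> \<psi> \<in> X \<Longrightarrow> ({#bx (fl \<phi>), bx (fl \<psi>)#}, {#}, fl (Tensor \<phi> \<psi>)) \<in> NB fl X"
| TE: "Tensor \<phi> \<psi> \<in> X \<Longrightarrow> ({#bx (fl (Tensor \<phi> \<psi>)), {#({#fl \<phi>, fl \<psi>#}, p)#}#}, {#}, p) \<in> NB fl X"
| OI: "One \<in> X \<Longrightarrow> ({#}, {#}, fl One) \<in> NB fl X"
| OE: "One \<in> X \<Longrightarrow> ({#bx (fl One), bx p#}, {#}, p) \<in> NB fl X"
| WI: "With \<phi> \<psi> \<in> X \<Longrightarrow> ({#{#({#}, fl \<phi>), ({#}, fl \<psi>)#}#}, {#}, fl (With \<phi> \<psi>)) \<in> NB fl X"
| WE1: "With \<phi> \<psi> \<in> X \<Longrightarrow> ({#bx (fl (With \<phi> \<psi>))#}, {#}, fl \<phi>) \<in> NB fl X"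
| WE2: "With \<phi> \<psi> \<in> X \<Longrightarrow> ({#bx (fl (With \<phi> \<psi>))#}, {#}, fl \<psi>) \<in> NB fl X"
| PI1: "Plus \<phi> \<psi> \<in> X \<Longrightarrow> ({#bx (fl \<phi>)#}, {#}, fl (Plus \<phi> \<psi>)) \<in> NB fl X"
| PI2: "Plus \<phi> \<psi> \<in> X \<Longrightarrow> ({#bx (fl \<psi>)#}, {#}, fl (Plus \<phi> \<psi>)) \<in> NB fl X"
| PE: "Plus \<phi> \<psi> \<in> X \<Longrightarrow> ({#bx (fl (Plus \<phi> \<psi>)), {#({#fl \<phi>#}, p), ({#fl \<psi>#}, p)#}#}, {#}, p) \<in> NB fl X"
| TopI: "Top \<in> X \<Longrightarrow> (image_mset bx Q, {#}, fl Top) \<in> NB fl X"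
| ZE: "Zero \<in> X \<Longrightarrow> (add_mset (bx (fl Zero)) (image_mset bx Q), {#}, p) \<in> NB fl X"
| BP: "Bang \<phi> \<in> X \<Longrightarrow> ({#}, {#({#}, fl \<phi>)#}, fl (Bang \<phi>)) \<in> NB fl X"
| BD: "Bang \<phi> \<in> X \<Longrightarrow> ({#bx (fl (Bang \<phi>)), {#({#fl \<phi>#}, p)#}#}, {#}, p) \<in> NB fl X"
| BW: "Bang \<phi> \<in> X \<Longrightarrow> ({#bx (fl (Bang \<phi>)), bx p#}, {#}, p) \<in> NB fl X"
| BC: "Bang \<phi> \<in> X \<Longrightarrow> ({#bx (fl (Bang \<phi>)), {#({#fl (Bang \<phi>), fl (Bang \<phi>)#}, p)#}#}, {#}, p) \<in> NB fl X"

lemma nd_top: "nd \<Gamma> Top"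
proof -
  obtain xs where xs: "mset xs = \<Gamma>" using ex_mset by blast
  have "nd (sum_list (map fst (map (\<lambda>f. ({#f#}, f)) xs))) Top"
    by (rule nd.TopI) (auto intro: nd.Ax)
  thus ?thesis using xs by (simp add: comp_def sum_list_single)
qed

lemma nd_zero: "nd \<Delta> Zero \<Longrightarrow> nd (\<Gamma> + \<Delta>) \<chi>"
proof -
  assume z: "nd \<Delta> Zero"
  obtain xs where xs: "mset xs = \<Gamma>" using ex_mset by blast
  have "nd (sum_list (map fst (map (\<lambda>f. ({#f#}, f)) xs)) + \<Delta>) \<chi>"
    by (rule nd.ZeroE[OF _ z]) (auto intro: nd.Ax)
  thus ?thesis using xs by (simp add: comp_def sum_list_single)
qed

lemma isbangE: "isbang \<beta> \<Longrightarrow> (\<And>\<delta>. \<beta> = Bang \<delta> \<Longrightarrow> P) \<Longrightarrow> P"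
  by (cases \<beta>) auto

lemma wk1: "nd Z \<chi> \<Longrightarrow> nd (add_mset (Bang \<delta>) Z) \<chi>"
proof -
  assume h: "nd Z \<chi>"
  have a: "nd {#Bang \<delta>#} (Bang \<delta>)" by (rule nd.Ax)
  from nd.Wk[OF a h] show ?thesis by simp
qed

lemma ctr1: "nd (add_mset (Bang \<delta>) (add_mset (Bang \<delta>) Z)) \<chi> \<Longrightarrow> nd (add_mset (Bang \<delta>) Z) \<chi>"
proof -
  assume h: "nd (add_mset (Bang \<delta>) (add_mset (Bang \<delta>) Z)) \<chi>"
  have "nd (Z + {#Bang \<delta>, Bang \<delta>#}) \<chi>" using h by (simp add: add_mset_commute)
  from nd.Ctr[OF nd.Ax this] show ?thesis by simp
qed

lemma wkB: "\<forall>\<beta>\<in>#Bs. isbang \<beta> \<Longrightarrow> nd Z \<chi> \<Longrightarrow> nd (Z + Bs) \<chi>"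
proof (induction Bs arbitrary: Z)
  case empty then show ?case by simp
next
  case (add \<beta> Bs)
  then obtain \<delta> where \<beta>: "\<beta> = Bang \<delta>" by (auto elim: isbangE)
  have "nd (Z + Bs) \<chi>" using add by simp
  then have "nd (add_mset (Bang \<delta>) (Z + Bs)) \<chi>" by (rule wk1)
  then show ?case using \<beta> by simp
qed

lemma ctrB: "\<forall>\<beta>\<in>#Bs. isbang \<beta> \<Longrightarrow> nd (Z + Bs + Bs) \<chi> \<Longrightarrow> nd (Z + Bs) \<chi>"
proof (induction Bs arbitrary: Z)
  case empty then show ?case by simp
next
  case (add \<beta> Bs)
  then obtain \<delta> where \<beta>: "\<beta> = Bang \<delta>" by (auto elim: isbangE)
  have "nd (add_mset (Bang \<delta>) (add_mset (Bang \<delta>) (Z + Bs + Bs))) \<chi>" using add.prems \<beta>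
    by (simp add: ac_simps)
  then have "nd (add_mset (Bang \<delta>) (Z + Bs + Bs)) \<chi>" by (rule ctr1)
  then have "nd ((add_mset (Bang \<delta>) Z) + Bs + Bs) \<chi>" by simp
  moreover have bs: "\<forall>\<beta>\<in>#Bs. isbang \<beta>" using add.prems(1) by simp
  ultimately have "nd ((add_mset (Bang \<delta>) Z) + Bs) \<chi>" using add.IH by blast
  then show ?case using \<beta> by simp
qed

lemma ctr_repB: "\<forall>\<beta>\<in>#Bs. isbang \<beta> \<Longrightarrow> nd (Z + repeat_mset n Bs + Bs) \<chi> \<Longrightarrow> nd (Z + Bs) \<chi>"
proof (induction n arbitrary: Z)
  case 0 then show ?case by simp
next
  case (Suc n)
  have "nd ((Z + repeat_mset n Bs) + Bs + Bs) \<chi>" using Suc.prems by (simp add: ac_simps)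
  then have "nd ((Z + repeat_mset n Bs) + Bs) \<chi>" using ctrB Suc.prems(1) by blast
  then show ?case using Suc.IH Suc.prems(1) by blast
qed

lemma merge2: "\<forall>\<beta>\<in>#Bs. isbang \<beta> \<Longrightarrow> nd (A + Bs + (B + Bs)) \<chi> \<Longrightarrow> nd (A + B + Bs) \<chi>"
proof -
  assume b: "\<forall>\<beta>\<in>#Bs. isbang \<beta>" and h: "nd (A + Bs + (B + Bs)) \<chi>"
  have "nd ((A + B) + Bs + Bs) \<chi>" using h by (simp add: ac_simps)
  thus ?thesis using ctrB[OF b] by blast
qed

lemma sum_list_plusM: "sum_list (map (\<lambda>x. f x + M) xs) = sum_list (map f xs) + repeat_mset (length xs) M"
  by (induction xs) (auto simp: ac_simps)

lemma tc0: "mset (map fst TC) = {#} \<Longrightarrow> TC = []" by simp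

lemma tc1: "mset (map fst TC) = {#T#} \<Longrightarrow> \<exists>c. TC = [(T, c)]"
  by (cases TC) auto

lemma tc2:
  fixes TC :: "('t \<times> 'm::comm_monoid_add) list"
  shows "mset (map fst TC) = {#T1, T2#} \<Longrightarrow>
   \<exists>c1 c2. (T1, c1) \<in> set TC \<and> (T2, c2) \<in> set TC \<and> sum_list (map snd TC) = c1 + c2"
proof -
  assume h: "mset (map fst TC) = {#T1, T2#}"
  then have "length TC = 2" by (metis size_mset length_map size_add_mset size_empty numeral_2_eq_2)
  then obtain a1 b1 a2 b2 where TC: "TC = [(a1, b1), (a2, b2)]"
    by (metis (no_types, opaque_lifting) One_nat_def Suc_length_conv length_0_conv numeral_2_eq_2 prod.exhaust)
  then have "add_mset a1 {#a2#} = add_mset T1 {#T2#}" using h by simp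
  then have "(a1 = T1 \<and> a2 = T2) \<or> (a1 = T2 \<and> a2 = T1)"
    by (auto simp: add_eq_conv_ex)
  then show ?thesis
  proof
    assume "a1 = T1 \<and> a2 = T2"
    then show ?thesis using TC by (intro exI[of _ b1] exI[of _ b2]) simp
  next
    assume "a1 = T2 \<and> a2 = T1"
    then show ?thesis using TC by (intro exI[of _ b2] exI[of _ b1]) (simp add: add.commute)
  qed
qed

lemma tcZ:
  fixes TC :: "('t \<times> 'm::comm_monoid_add) list"
  shows "mset (map fst TC) = add_mset T R \<Longrightarrow>
   \<exists>c rest. (T, c) \<in> set TC \<and> sum_list (map snd TC) = c + rest"
proof -
  assume h: "mset (map fst TC) = add_mset T R"
  then have "T \<in># mset (map fst TC)" by simp
  then have "T \<in> fst ` set TC" by simp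
  then obtain c where c: "(T, c) \<in> set TC" by force
  have "sum_list (map snd TC) = snd (T, c) + sum_list (map snd (remove1 (T, c) TC))"
    by (rule sum_list_map_remove1[OF c])
  then show ?thesis using c by auto
qed

fun unb :: "'a form \<Rightarrow> 'a form" where
  "unb (Bang x) = x"
| "unb x = x"

lemma unb_bang: "isbang \<beta> \<Longrightarrow> Bang (unb \<beta>) = \<beta>" by (cases \<beta>) auto

lemma image_mset_sum_list: "image_mset f (sum_list xs) = sum_list (map (image_mset f) xs)"
  by (induction xs) auto

lemma discard:
  assumes Bs: "\<forall>\<beta>\<in>#Bs. isbang \<beta>"
  shows "nd (Z + Bs) \<chi> \<Longrightarrow> \<forall>x\<in>set DC. nd (image_mset u (snd x) + Bs) (u (fst x)) \<and> isbang (u (fst x))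
    \<Longrightarrow> nd (Z + image_mset u (sum_list (map snd DC)) + Bs) \<chi>"
proof (induction DC arbitrary: Z)
  case Nil then show ?case by simp
next
  case (Cons x DC)
  have hx: "nd (image_mset u (snd x) + Bs) (u (fst x))" "isbang (u (fst x))" using Cons.prems(2) by auto
  obtain \<psi> where \<psi>: "u (fst x) = Bang \<psi>" using hx(2) by (auto elim: isbangE)
  have h1: "nd (image_mset u (snd x) + Bs) (Bang \<psi>)" using hx(1) \<psi> by simp
  have "nd ((image_mset u (snd x) + Bs) + (Z + Bs)) \<chi>" by (rule nd.Wk[OF h1 Cons.prems(1)])
  then have "nd (image_mset u (snd x) + Z + Bs) \<chi>" by (rule merge2[OF Bs])
  then have z: "nd ((Z + image_mset u (snd x)) + Bs) \<chi>" by (simp add: ac_simps)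
  have r: "\<forall>x\<in>set DC. nd (image_mset u (snd x) + Bs) (u (fst x)) \<and> isbang (u (fst x))"
    using Cons.prems(2) by simp
  have "nd ((Z + image_mset u (snd x)) + image_mset u (sum_list (map snd DC)) + Bs) \<chi>"
    by (rule Cons.IH[OF z r])
  then show ?case by (simp add: ac_simps)
qed

locale enc =
  fixes fl :: "'a form \<Rightarrow> 'a" and X :: "'a form set"
  assumes closed: "\<chi> \<in> X \<Longrightarrow> sub \<chi> \<subseteq> X"
    and injfl: "inj_on fl X"
    and atm: "Atom q \<in> X \<Longrightarrow> fl (Atom q) = q"
begin

lemma subX:
  "Lolli a b \<in> X \<Longrightarrow> a \<in> X" "Lolli a b \<in> X \<Longrightarrow> b \<in> X"
  "Tensor a b \<in> X \<Longrightarrow> a \<in> X" "Tensor a b \<in> X \<Longrightarrow> b \<in> X"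
  "With a b \<in> X \<Longrightarrow> a \<in> X" "With a b \<in> X \<Longrightarrow> b \<in> X"
  "Plus a b \<in> X \<Longrightarrow> a \<in> X" "Plus a b \<in> X \<Longrightarrow> b \<in> X"
  "Bang a \<in> X \<Longrightarrow> a \<in> X"
  using closed self_sub by fastforce+

lemma wk_b:
  assumes "NB fl X \<subseteq> C" "Bang \<phi> \<in> X" "aderiv C K q"
  shows "aderiv C (K + {#fl (Bang \<phi>)#}) q"
proof -
  have "aderiv C ({#fl (Bang \<phi>)#} + K) q"
    by (rule app2[OF subsetD[OF assms(1) NB.BW[OF assms(2)]]]) (use assms(3) aderiv.Ref in auto)
  thus ?thesis by (simp add: add.commute)
qed

lemma ctr_b:
  assumes "NB fl X \<subseteq> C" "Bang \<phi> \<in> X" "aderiv C (K + {#fl (Bang \<phi>), fl (Bang \<phi>)#}) q"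
  shows "aderiv C (K + {#fl (Bang \<phi>)#}) q"
proof -
  have "aderiv C ({#fl (Bang \<phi>)#} + K) q"
    by (rule app2[OF subsetD[OF assms(1) NB.BC[OF assms(2)]]]) (use assms(3) aderiv.Ref in auto)
  thus ?thesis by (simp add: add.commute)
qed

lemma ctr_rep:
  assumes "NB fl X \<subseteq> C" "Bang \<phi> \<in> X"
  shows "aderiv C (K + replicate_mset (Suc n) (fl (Bang \<phi>))) q \<Longrightarrow> aderiv C (K + {#fl (Bang \<phi>)#}) q"
proof (induction n arbitrary: K)
  case 0 then show ?case by simp
next
  case (Suc n)
  have "aderiv C ((K + replicate_mset n (fl (Bang \<phi>))) + {#fl (Bang \<phi>), fl (Bang \<phi>)#}) q"
    using Suc.prems by (simp add: add.assoc)
  then have "aderiv C ((K + replicate_mset n (fl (Bang \<phi>))) + {#fl (Bang \<phi>)#}) q"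
    by (rule ctr_b[OF assms])
  then show ?case using Suc.IH by (simp add: add.assoc)
qed

lemma pers_ax: "persistent (insert ({#},{#},a) C) d \<Longrightarrow> persistent C d"
  unfolding persistent_def by auto

lemma elim_ax:
  assumes C: "NB fl X \<subseteq> C" and B: "Bang \<phi> \<in> X"
  shows "aderiv (insert ({#},{#},fl \<phi>) C) K p \<Longrightarrow> aderiv C (K + {#fl (Bang \<phi>)#}) p"
proof (induction rule: aderiv.induct)
  case (Ref q) show ?case using wk_b[OF C B aderiv.Ref] .
next
  case (App A S p TC DC)
  define b where "b = fl (Bang \<phi>)"
  have persC: "\<forall>d\<in>set DC. persistent C (fst d)"
  proof
    fix d assume "d \<in> set DC"
    with App(3) have "persistent (insert ({#},{#},fl \<phi>) C) (fst d)" by simp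
    thus "persistent C (fst d)" by (rule pers_ax)
  qed
  have bpr: "({#}, {#({#}, fl \<phi>)#}, b) \<in> C" unfolding b_def by (rule subsetD[OF C NB.BP[OF B]])
  have bpers: "persistent C b" unfolding persistent_def using bpr by (intro exI[of _ "{#({#}, fl \<phi>)#}"]) simp
  have IT: "\<forall>x\<in>set TC. \<forall>y\<in>#fst x. aderiv C (snd x + {#b#} + fst y) (snd y)"
  proof (intro ballI)
    fix x y assume xy: "x \<in> set TC" "y \<in># fst x"
    have "aderiv C (snd x + fst y + {#b#}) (snd y)" using App(4) xy unfolding b_def by blast
    thus "aderiv C (snd x + {#b#} + fst y) (snd y)" by (simp add: add.assoc add.commute)
  qed
  have ID: "\<forall>d\<in>set DC. aderiv C (snd d + {#b#}) (fst d)" using App(5) unfolding b_def by blast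
  have IS: "\<forall>y\<in>#S. aderiv C (mset (map fst DC) + {#b#} + fst y) (snd y)"
  proof (intro ballI)
    fix y assume y: "y \<in># S"
    have "aderiv C (mset (map fst DC) + fst y + {#b#}) (snd y)" using App(6) y unfolding b_def by blast
    thus "aderiv C (mset (map fst DC) + {#b#} + fst y) (snd y)" by (simp add: add.assoc add.commute)
  qed
  have sTC: "sum_list (map (\<lambda>x. snd x + {#b#}) TC) = sum_list (map snd TC) + replicate_mset (length TC) b"
    by (rule sum_list_plus_b)
  have sDC: "sum_list (map (\<lambda>x. snd x + {#b#}) DC) = sum_list (map snd DC) + replicate_mset (length DC) b"
    by (rule sum_list_plus_b)
  show ?case
  proof (cases "(A,S,p) \<in> C")
    case True
    define TC' where "TC' = map (\<lambda>x. (fst x, snd x + {#b#})) TC"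
    define DC' where "DC' = map (\<lambda>d. (fst d, snd d + {#b#})) DC @ [(b, {#b#})]"
    have "aderiv C (sum_list (map snd TC') + sum_list (map snd DC')) p"
    proof (rule aderiv.App[OF True])
      show "mset (map fst TC') = A" using App(2) by (simp add: TC'_def comp_def)
      show "\<forall>d\<in>set DC'. persistent C (fst d)" using persC bpers by (simp add: DC'_def)
      show "\<forall>x\<in>set TC'. \<forall>y\<in>#fst x. aderiv C (snd x + fst y) (snd y)" using IT by (simp add: TC'_def)
      show "\<forall>d\<in>set DC'. aderiv C (snd d) (fst d)" using ID by (simp add: DC'_def aderiv.Ref)
      show "\<forall>y\<in>#S. aderiv C (mset (map fst DC') + fst y) (snd y)" using IS by (simp add: DC'_def comp_def)
    qed
    moreover have "map snd TC' = map (\<lambda>x. snd x + {#b#}) TC" by (simp add: TC'_def)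
    moreover have "map snd DC' = map (\<lambda>x. snd x + {#b#}) DC @ [{#b#}]" by (simp add: DC'_def)
    ultimately have "aderiv C ((sum_list (map snd TC) + sum_list (map snd DC)) + replicate_mset (Suc (length TC + length DC)) b) p"
      using sTC sDC by (simp add: rep_plus ac_simps)
    then show ?thesis using ctr_rep[OF C B] unfolding b_def by blast
  next
    case False
    with App(1) have ax: "A = {#}" "S = {#}" "p = fl \<phi>" by auto
    with App(2) have TC: "TC = []" by simp
    have r: "({#bx b, {#({#fl \<phi>#}, fl \<phi>)#}#}, {#}, fl \<phi>) \<in> C" unfolding b_def by (rule subsetD[OF C NB.BD[OF B]])
    define TC' where "TC' = [(bx b, {#b#}), ({#({#fl \<phi>#}, fl \<phi>)#}, {#})]"
    define DC' where "DC' = map (\<lambda>d. (fst d, snd d + {#b#})) DC"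
    have "aderiv C (sum_list (map snd TC') + sum_list (map snd DC')) (fl \<phi>)"
    proof (rule aderiv.App[OF r])
      show "mset (map fst TC') = {#bx b, {#({#fl \<phi>#}, fl \<phi>)#}#}" by (simp add: TC'_def)
      show "\<forall>d\<in>set DC'. persistent C (fst d)" using persC by (simp add: DC'_def)
      show "\<forall>x\<in>set TC'. \<forall>y\<in>#fst x. aderiv C (snd x + fst y) (snd y)"
        by (simp add: TC'_def aderiv.Ref)
      show "\<forall>d\<in>set DC'. aderiv C (snd d) (fst d)" using ID by (simp add: DC'_def)
      show "\<forall>y\<in>#{#}. aderiv C (mset (map fst DC') + fst y) (snd y)" by simp
    qed
    moreover have "map snd DC' = map (\<lambda>x. snd x + {#b#}) DC" by (simp add: DC'_def)
    ultimately have "aderiv C (sum_list (map snd DC) + replicate_mset (Suc (length DC)) b) (fl \<phi>)"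
      using sDC by (simp add: TC'_def ac_simps)
    then show ?thesis using ctr_rep[OF C B] TC ax unfolding b_def by simp
  qed
qed


lemma PA:
  assumes P: "\<And>C L. NB fl X \<subseteq> C \<Longrightarrow> aderiv C L (fl \<theta>) = supp C L \<theta>"
    and NC: "NB fl X \<subseteq> D" and pc: "piece D \<theta> K"
  shows "aderiv D K (fl \<theta>)"
proof (cases "isbang \<theta>")
  case False
  have "supp D K \<theta>" using pc piece_nb[OF False] by simp
  thus ?thesis by (rule iffD2[OF P[OF NC, of K]])
next
  case True then obtain \<delta> where \<theta>: "\<theta> = Bang \<delta>" by (cases \<theta>) auto
  then have K: "K = {#}" and s: "supp D {#} \<delta>" using pc piece_b by auto
  have "supp D {#} \<theta>" unfolding \<theta> using s by (rule supp_bang_intro)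
  thus ?thesis using P[OF NC, of "{#}"] K by simp
qed

lemma PB:
  assumes P: "\<And>C L. NB fl X \<subseteq> C \<Longrightarrow> aderiv C L (fl \<theta>) = supp C L \<theta>"
    and NC: "NB fl X \<subseteq> C"
    and H: "\<And>D K1. C \<subseteq> D \<Longrightarrow> piece D \<theta> K1 \<Longrightarrow> aderiv D (K + K1) p"
  shows "aderiv C (K + {#fl \<theta>#}) p"
proof (cases "isbang \<theta>")
  case False
  have "supp C {#fl \<theta>#} \<theta>" using iffD1[OF P[OF NC, of "{#fl \<theta>#}"] aderiv.Ref] .
  then have "piece C \<theta> {#fl \<theta>#}" using piece_nb[OF False] by simp
  from H[OF order_refl this] show ?thesis .
next
  case True then obtain \<delta> where \<theta>: "\<theta> = Bang \<delta>" by (cases \<theta>) auto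
  have s: "supp C {#fl \<theta>#} (Bang \<delta>)" using iffD1[OF P[OF NC, of "{#fl \<theta>#}"] aderiv.Ref] \<theta> by simp
  have h2: "\<forall>D. C \<subseteq> D \<longrightarrow> supp D {#} \<delta> \<longrightarrow> aderiv D K p"
    using H[of _ "{#}"] by (simp add: \<theta> piece_b)
  from s h2 have "aderiv C ({#fl \<theta>#} + K) p" unfolding supp_simps by blast
  thus ?thesis by (simp add: add.commute)
qed

lemma equiv: "\<chi> \<in> X \<Longrightarrow> NB fl X \<subseteq> C \<Longrightarrow> aderiv C L (fl \<chi>) = supp C L \<chi>"
proof (induction \<chi> arbitrary: C L)
  case (Atom q) thus ?case using atm by simp
next
  case (Lolli \<phi> \<psi>)
  have NB: "NB fl X \<subseteq> C" by (rule Lolli.prems(2))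
  have LX: "Lolli \<phi> \<psi> \<in> X" by (rule Lolli.prems(1))
  have P\<phi>: "\<And>C L. NB fl X \<subseteq> C \<Longrightarrow> aderiv C L (fl \<phi>) = supp C L \<phi>"
    by (rule Lolli.IH(1)[OF subX(1)[OF LX]])
  have P\<psi>: "\<And>C L. NB fl X \<subseteq> C \<Longrightarrow> aderiv C L (fl \<psi>) = supp C L \<psi>"
    by (rule Lolli.IH(2)[OF subX(2)[OF LX]])
  show ?case
  proof
    assume a: "aderiv C L (fl (Lolli \<phi> \<psi>))"
    show "supp C L (Lolli \<phi> \<psi>)" unfolding supp_simps
    proof (intro allI impI)
      fix C' K assume CC: "C \<subseteq> C'" and pc: "piece C' \<phi> K"
      have N': "NB fl X \<subseteq> C'" using NB CC by (rule order_trans)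
      have k: "aderiv C' K (fl \<phi>)" by (rule PA[OF P\<phi> N' pc])
      have l: "aderiv C' L (fl (Lolli \<phi> \<psi>))" by (rule aderiv_mono[OF a CC])
      have "aderiv C' (L + K) (fl \<psi>)"
        by (rule app2[OF subsetD[OF N' NB.LE[OF LX]]]) (use k l in simp_all)
      then show "supp C' (L + K) \<psi>" using P\<psi>[OF N'] by simp
    qed
  next
    assume s: "supp C L (Lolli \<phi> \<psi>)"
    have h: "aderiv C (L + {#fl \<phi>#}) (fl \<psi>)"
    proof (rule PB[OF P\<phi> NB])
      fix D K1 assume CD: "C \<subseteq> D" and pc: "piece D \<phi> K1"
      have "supp D (L + K1) \<psi>" using s CD pc unfolding supp_simps by blast
      moreover have ND: "NB fl X \<subseteq> D" using NB CD by (rule order_trans)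
      ultimately show "aderiv D (L + K1) (fl \<psi>)" using P\<psi>[OF ND] by simp
    qed
    show "aderiv C L (fl (Lolli \<phi> \<psi>))"
      by (rule app1[OF subsetD[OF NB NB.LI[OF LX]]]) (use h in simp)
  qed
next
  case (Tensor \<phi> \<psi>)
  have NB: "NB fl X \<subseteq> C" by (rule Tensor.prems(2))
  have TX: "Tensor \<phi> \<psi> \<in> X" by (rule Tensor.prems(1))
  have P\<phi>: "\<And>C L. NB fl X \<subseteq> C \<Longrightarrow> aderiv C L (fl \<phi>) = supp C L \<phi>"
    by (rule Tensor.IH(1)[OF subX(3)[OF TX]])
  have P\<psi>: "\<And>C L. NB fl X \<subseteq> C \<Longrightarrow> aderiv C L (fl \<psi>) = supp C L \<psi>"
    by (rule Tensor.IH(2)[OF subX(4)[OF TX]])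
  show ?case
  proof
    assume a: "aderiv C L (fl (Tensor \<phi> \<psi>))"
    show "supp C L (Tensor \<phi> \<psi>)" unfolding supp_simps
    proof (intro allI impI)
      fix C' K p assume CC: "C \<subseteq> C'"
        and H: "\<forall>D K1 K2. C' \<subseteq> D \<longrightarrow> piece D \<phi> K1 \<longrightarrow> piece D \<psi> K2 \<longrightarrow> aderiv D (K + K1 + K2) p"
      have N': "NB fl X \<subseteq> C'" using NB CC by (rule order_trans)
      have "aderiv C' (K + {#fl \<psi>#} + {#fl \<phi>#}) p"
      proof (rule PB[OF P\<phi> N'])
        fix D K1 assume CD: "C' \<subseteq> D" and p1: "piece D \<phi> K1"
        have ND: "NB fl X \<subseteq> D" using N' CD by (rule order_trans)
        have "aderiv D (K + K1 + {#fl \<psi>#}) p"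
        proof (rule PB[OF P\<psi> ND])
          fix D' K2 assume DD: "D \<subseteq> D'" and p2: "piece D' \<psi> K2"
          have p1': "piece D' \<phi> K1" using p1 DD by (rule piece_mono)
          have "C' \<subseteq> D'" using CD DD by (rule order_trans)
          then show "aderiv D' (K + K1 + K2) p" using H p1' p2 by blast
        qed
        then show "aderiv D (K + {#fl \<psi>#} + K1) p" by (simp add: ac_simps)
      qed
      then have k: "aderiv C' (K + {#fl \<phi>, fl \<psi>#}) p" by (simp add: add_mset_commute)
      have l: "aderiv C' L (fl (Tensor \<phi> \<psi>))" by (rule aderiv_mono[OF a CC])
      show "aderiv C' (L + K) p"
        by (rule app2[OF subsetD[OF N' NB.TE[OF TX]]]) (use k l in simp_all)
    qed
  next
    assume s: "supp C L (Tensor \<phi> \<psi>)"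
    have H: "\<forall>D K1 K2. C \<subseteq> D \<longrightarrow> piece D \<phi> K1 \<longrightarrow> piece D \<psi> K2 \<longrightarrow> aderiv D ({#} + K1 + K2) (fl (Tensor \<phi> \<psi>))"
    proof (intro allI impI)
      fix D K1 K2 assume CD: "C \<subseteq> D" and p1: "piece D \<phi> K1" and p2: "piece D \<psi> K2"
      have ND: "NB fl X \<subseteq> D" using NB CD by (rule order_trans)
      have k1: "aderiv D K1 (fl \<phi>)" by (rule PA[OF P\<phi> ND p1])
      have k2: "aderiv D K2 (fl \<psi>)" by (rule PA[OF P\<psi> ND p2])
      have "aderiv D (K1 + K2) (fl (Tensor \<phi> \<psi>))"
        by (rule app2[OF subsetD[OF ND NB.TI[OF TX]]]) (use k1 k2 in simp_all)
      then show "aderiv D ({#} + K1 + K2) (fl (Tensor \<phi> \<psi>))" by simp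
    qed
    have "aderiv C (L + {#}) (fl (Tensor \<phi> \<psi>))" using s H unfolding supp_simps by blast
    then show "aderiv C L (fl (Tensor \<phi> \<psi>))" by simp
  qed
next
  case One
  have NB: "NB fl X \<subseteq> C" by (rule One.prems(2))
  have OX: "One \<in> X" by (rule One.prems(1))
  show ?case
  proof
    assume a: "aderiv C L (fl One)"
    show "supp C L One" unfolding supp_simps
    proof (intro allI impI)
      fix C' K p assume CC: "C \<subseteq> C'" and k: "aderiv C' K p"
      have N': "NB fl X \<subseteq> C'" using NB CC by (rule order_trans)
      have l: "aderiv C' L (fl One)" by (rule aderiv_mono[OF a CC])
      show "aderiv C' (L + K) p"
        by (rule app2[OF subsetD[OF N' NB.OE[OF OX]]]) (use k l in simp_all)
    qed
  next
    assume s: "supp C L One"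
    have "aderiv C {#} (fl One)" by (rule app0[OF subsetD[OF NB NB.OI[OF OX]]])
    then have "aderiv C (L + {#}) (fl One)" using s unfolding supp_simps by blast
    then show "aderiv C L (fl One)" by simp
  qed
next
  case Zero
  have NB: "NB fl X \<subseteq> C" by (rule Zero.prems(2))
  have ZX: "Zero \<in> X" by (rule Zero.prems(1))
  show ?case
  proof
    assume a: "aderiv C L (fl Zero)"
    show "supp C L Zero" unfolding supp_simps
    proof (intro allI)
      fix p K
      show "aderiv C (L + K) p"
        by (rule appQ[OF subsetD[OF NB NB.ZE[OF ZX, where Q=K and p=p]]]) (use a in simp)
    qed
  next
    assume s: "supp C L Zero"
    then have "aderiv C (L + {#}) (fl Zero)" unfolding supp_simps by blast
    then show "aderiv C L (fl Zero)" by simp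
  qed
next
  case Top
  have NB: "NB fl X \<subseteq> C" by (rule Top.prems(2))
  have TX: "Top \<in> X" by (rule Top.prems(1))
  have "aderiv C L (fl Top)" by (rule appTop[OF subsetD[OF NB NB.TopI[OF TX, where Q=L]]])
  then show ?case by simp
next
  case (With \<phi> \<psi>)
  have NB: "NB fl X \<subseteq> C" by (rule With.prems(2))
  have WX: "With \<phi> \<psi> \<in> X" by (rule With.prems(1))
  have P\<phi>: "\<And>C L. NB fl X \<subseteq> C \<Longrightarrow> aderiv C L (fl \<phi>) = supp C L \<phi>"
    by (rule With.IH(1)[OF subX(5)[OF WX]])
  have P\<psi>: "\<And>C L. NB fl X \<subseteq> C \<Longrightarrow> aderiv C L (fl \<psi>) = supp C L \<psi>"
    by (rule With.IH(2)[OF subX(6)[OF WX]])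
  show ?case
  proof
    assume a: "aderiv C L (fl (With \<phi> \<psi>))"
    have "aderiv C L (fl \<phi>)" by (rule app1[OF subsetD[OF NB NB.WE1[OF WX]]]) (use a in simp)
    moreover have "aderiv C L (fl \<psi>)" by (rule app1[OF subsetD[OF NB NB.WE2[OF WX]]]) (use a in simp)
    ultimately show "supp C L (With \<phi> \<psi>)" using P\<phi>[OF NB] P\<psi>[OF NB] by simp
  next
    assume s: "supp C L (With \<phi> \<psi>)"
    then have k1: "aderiv C L (fl \<phi>)" and k2: "aderiv C L (fl \<psi>)" using P\<phi>[OF NB] P\<psi>[OF NB] by simp_all
    show "aderiv C L (fl (With \<phi> \<psi>))"
      by (rule app1[OF subsetD[OF NB NB.WI[OF WX]]]) (use k1 k2 in simp)
  qed
next
  case (Plus \<phi> \<psi>)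
  have NB: "NB fl X \<subseteq> C" by (rule Plus.prems(2))
  have PX: "Plus \<phi> \<psi> \<in> X" by (rule Plus.prems(1))
  have P\<phi>: "\<And>C L. NB fl X \<subseteq> C \<Longrightarrow> aderiv C L (fl \<phi>) = supp C L \<phi>"
    by (rule Plus.IH(1)[OF subX(7)[OF PX]])
  have P\<psi>: "\<And>C L. NB fl X \<subseteq> C \<Longrightarrow> aderiv C L (fl \<psi>) = supp C L \<psi>"
    by (rule Plus.IH(2)[OF subX(8)[OF PX]])
  show ?case
  proof
    assume a: "aderiv C L (fl (Plus \<phi> \<psi>))"
    show "supp C L (Plus \<phi> \<psi>)" unfolding supp_simps
    proof (intro allI impI)
      fix C' K p assume CC: "C \<subseteq> C'"
        and H1: "\<forall>D K1. C' \<subseteq> D \<longrightarrow> piece D \<phi> K1 \<longrightarrow> aderiv D (K + K1) p"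
        and H2: "\<forall>D K1. C' \<subseteq> D \<longrightarrow> piece D \<psi> K1 \<longrightarrow> aderiv D (K + K1) p"
      have N': "NB fl X \<subseteq> C'" using NB CC by (rule order_trans)
      have k1: "aderiv C' (K + {#fl \<phi>#}) p"
      proof (rule PB[OF P\<phi> N'])
        fix D K1 assume "C' \<subseteq> D" "piece D \<phi> K1"
        then show "aderiv D (K + K1) p" using H1 by blast
      qed
      have k2: "aderiv C' (K + {#fl \<psi>#}) p"
      proof (rule PB[OF P\<psi> N'])
        fix D K1 assume "C' \<subseteq> D" "piece D \<psi> K1"
        then show "aderiv D (K + K1) p" using H2 by blast
      qed
      have l: "aderiv C' L (fl (Plus \<phi> \<psi>))" by (rule aderiv_mono[OF a CC])
      show "aderiv C' (L + K) p"
        by (rule app2[OF subsetD[OF N' NB.PE[OF PX]]]) (use k1 k2 l in simp_all)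
    qed
  next
    assume s: "supp C L (Plus \<phi> \<psi>)"
    have H1: "\<forall>D K1. C \<subseteq> D \<longrightarrow> piece D \<phi> K1 \<longrightarrow> aderiv D ({#} + K1) (fl (Plus \<phi> \<psi>))"
    proof (intro allI impI)
      fix D K1 assume CD: "C \<subseteq> D" and p1: "piece D \<phi> K1"
      have ND: "NB fl X \<subseteq> D" using NB CD by (rule order_trans)
      have k1: "aderiv D K1 (fl \<phi>)" by (rule PA[OF P\<phi> ND p1])
      have "aderiv D K1 (fl (Plus \<phi> \<psi>))" by (rule app1[OF subsetD[OF ND NB.PI1[OF PX]]]) (use k1 in simp)
      then show "aderiv D ({#} + K1) (fl (Plus \<phi> \<psi>))" by simp
    qed
    have H2: "\<forall>D K1. C \<subseteq> D \<longrightarrow> piece D \<psi> K1 \<longrightarrow> aderiv D ({#} + K1) (fl (Plus \<phi> \<psi>))"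
    proof (intro allI impI)
      fix D K1 assume CD: "C \<subseteq> D" and p1: "piece D \<psi> K1"
      have ND: "NB fl X \<subseteq> D" using NB CD by (rule order_trans)
      have k1: "aderiv D K1 (fl \<psi>)" by (rule PA[OF P\<psi> ND p1])
      have "aderiv D K1 (fl (Plus \<phi> \<psi>))" by (rule app1[OF subsetD[OF ND NB.PI2[OF PX]]]) (use k1 in simp)
      then show "aderiv D ({#} + K1) (fl (Plus \<phi> \<psi>))" by simp
    qed
    have "aderiv C (L + {#}) (fl (Plus \<phi> \<psi>))" using s H1 H2 unfolding supp_simps by blast
    then show "aderiv C L (fl (Plus \<phi> \<psi>))" by simp
  qed
next
  case (Bang \<phi>)
  have NB: "NB fl X \<subseteq> C" by (rule Bang.prems(2))
  have BX: "Bang \<phi> \<in> X" by (rule Bang.prems(1))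
  have P\<phi>: "\<And>C L. NB fl X \<subseteq> C \<Longrightarrow> aderiv C L (fl \<phi>) = supp C L \<phi>"
    by (rule Bang.IH[OF subX(9)[OF BX]])
  show ?case
  proof
    assume a: "aderiv C L (fl (Bang \<phi>))"
    show "supp C L (Bang \<phi>)" unfolding supp_simps
    proof (intro allI impI)
      fix C' K p assume CC: "C \<subseteq> C'" and H: "\<forall>D. C' \<subseteq> D \<longrightarrow> supp D {#} \<phi> \<longrightarrow> aderiv D K p"
      have N': "NB fl X \<subseteq> C'" using NB CC by (rule order_trans)
      define D where "D = insert ({#},{#},fl \<phi>) C'"
      have CD: "C' \<subseteq> D" by (auto simp: D_def)
      have ND: "NB fl X \<subseteq> D" using N' CD by (rule order_trans)
      have "aderiv D {#} (fl \<phi>)" by (rule app0) (simp add: D_def)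
      hence "supp D {#} \<phi>" using P\<phi>[OF ND] by simp
      hence "aderiv D K p" using H CD by blast
      hence "aderiv C' (K + {#fl (Bang \<phi>)#}) p" unfolding D_def by (rule elim_ax[OF N' BX])
      hence k2: "aderiv C' (K + {#fl (Bang \<phi>)#} + {#fl (Bang \<phi>)#}) p" by (rule wk_b[OF N' BX])
      have l: "aderiv C' L (fl (Bang \<phi>))" by (rule aderiv_mono[OF a CC])
      have k3: "aderiv C' (K + {#fl (Bang \<phi>), fl (Bang \<phi>)#}) p" using k2 by (simp add: ac_simps)
      show "aderiv C' (L + K) p"
        by (rule app2[OF subsetD[OF N' NB.BC[OF BX]]]) (use k3 l in simp_all)
    qed
  next
    assume s: "supp C L (Bang \<phi>)"
    have H: "\<forall>D. C \<subseteq> D \<longrightarrow> supp D {#} \<phi> \<longrightarrow> aderiv D {#} (fl (Bang \<phi>))"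
    proof (intro allI impI)
      fix D assume CD: "C \<subseteq> D" and sd: "supp D {#} \<phi>"
      have ND: "NB fl X \<subseteq> D" using NB CD by (rule order_trans)
      have "aderiv D {#} (fl \<phi>)" using P\<phi>[OF ND] sd by simp
      then show "aderiv D {#} (fl (Bang \<phi>))" by (rule appP[OF subsetD[OF ND NB.BP[OF BX]]])
    qed
    have "aderiv C (L + {#}) (fl (Bang \<phi>))" using s H unfolding supp_simps by blast
    then show "aderiv C L (fl (Bang \<phi>))" by simp
  qed
qed

definition u :: "'a \<Rightarrow> 'a form" where
  "u a = (if a \<in> fl ` X then inv_into X fl a else Atom a)"

lemma u_fl[simp]: "\<chi> \<in> X \<Longrightarrow> u (fl \<chi>) = \<chi>"
  unfolding u_def using injfl by (simp add: inv_into_f_f)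

definition EB :: "'a form multiset \<Rightarrow> 'a arule set" where
  "EB Bs = {r. \<exists>\<delta>. Bang \<delta> \<in># Bs \<and> r = ({#}, {#}, fl \<delta>)}"

lemma rule_S: "(A, S, p) \<in> NB fl X \<union> EB Bs \<Longrightarrow> S \<noteq> {#} \<Longrightarrow>
   \<exists>\<phi>. Bang \<phi> \<in> X \<and> A = {#} \<and> S = {#({#}, fl \<phi>)#} \<and> p = fl (Bang \<phi>)"
  by (auto simp: EB_def elim!: NB.cases)

lemma pers_char: "persistent (NB fl X \<union> EB Bs) d \<Longrightarrow> \<exists>\<psi>. Bang \<psi> \<in> X \<and> d = fl (Bang \<psi>)"
  unfolding persistent_def using rule_S by blast

lemma bx_mem: "({#}, a) \<in># bx a" by (simp add: bx_def)

lemma core: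
  assumes Bs: "\<forall>\<beta>\<in>#Bs. isbang \<beta>" and BX: "\<forall>\<delta>. Bang \<delta> \<in># Bs \<longrightarrow> Bang \<delta> \<in> X"
    and r: "(A, {#}, p) \<in> NB fl X \<union> EB Bs" and tc: "mset (map fst TC) = A"
    and IT: "\<And>T c Q q. (T, c) \<in> set TC \<Longrightarrow> (Q, q) \<in># T \<Longrightarrow> nd (image_mset u c + image_mset u Q + Bs) (u q)"
  shows "nd (image_mset u (sum_list (map snd TC)) + Bs) (u p)"
proof -
  from r show ?thesis
  proof
    assume "(A, {#}, p) \<in> EB Bs"
    then obtain \<delta> where \<delta>: "Bang \<delta> \<in># Bs" "A = {#}" "p = fl \<delta>" by (auto simp: EB_def)
    then have TC: "TC = []" using tc by simp
    have \<delta>X: "\<delta> \<in> X" using BX \<delta>(1) subX(9) by blast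
    have "nd ({#Bang \<delta>#} + {#}) \<delta>" by (rule nd.Der[OF nd.Ax]) (simp add: nd.Ax[of \<delta>, simplified])
    then have nd1: "nd {#Bang \<delta>#} \<delta>" by simp
    have bs': "\<forall>\<beta>\<in>#Bs - {#Bang \<delta>#}. isbang \<beta>"
    proof
      fix \<beta> assume "\<beta> \<in># Bs - {#Bang \<delta>#}"
      then have "\<beta> \<in># Bs" by (rule in_diffD)
      then show "isbang \<beta>" using Bs by simp
    qed
    have nd2: "nd ({#Bang \<delta>#} + (Bs - {#Bang \<delta>#})) \<delta>" by (rule wkB[OF bs' nd1])
    have eqB: "{#Bang \<delta>#} + (Bs - {#Bang \<delta>#}) = Bs" using \<delta>(1) by simp
    have ndB: "nd Bs \<delta>" using nd2 unfolding eqB .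
    show ?thesis using ndB TC \<delta>(3) \<delta>X by simp
  next
    assume "(A, {#}, p) \<in> NB fl X"
    then show ?thesis
    proof (cases rule: NB.cases)
      case (LI \<phi> \<psi>)
      have X0: "Lolli \<phi> \<psi> \<in> X" using LI by simp
      have X1: "\<phi> \<in> X" by (rule subX(1)[OF X0])
      have X2: "\<psi> \<in> X" by (rule subX(2)[OF X0])
      have pe: "p = fl (Lolli \<phi> \<psi>)" using LI by simp
      have tcA: "mset (map fst TC) = {#{#({#fl \<phi>#}, fl \<psi>)#}#}" using tc LI by simp
      obtain c where TC: "TC = [({#({#fl \<phi>#}, fl \<psi>)#}, c)]" using tc1[OF tcA] by blast
      have "nd (image_mset u c + image_mset u {#fl \<phi>#} + Bs) (u (fl \<psi>))" using IT TC by simp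
      then have "nd (add_mset \<phi> (image_mset u c + Bs)) \<psi>" using X1 X2 by simp
      then have "nd (image_mset u c + Bs) (Lolli \<phi> \<psi>)" by (rule nd.LolliI)
      then show ?thesis using TC pe X0 by simp
    next
      case (LE \<phi> \<psi>)
      have X0: "Lolli \<phi> \<psi> \<in> X" using LE by simp
      have X1: "\<phi> \<in> X" by (rule subX(1)[OF X0])
      have X2: "\<psi> \<in> X" by (rule subX(2)[OF X0])
      have pe: "p = fl \<psi>" using LE by simp
      have tcA: "mset (map fst TC) = {#bx (fl (Lolli \<phi> \<psi>)), bx (fl \<phi>)#}" using tc LE by simp
      obtain c1 c2 where m1: "(bx (fl (Lolli \<phi> \<psi>)), c1) \<in> set TC" and m2: "(bx (fl \<phi>), c2) \<in> set TC"
        and sm: "sum_list (map snd TC) = c1 + c2" using tc2[OF tcA] by blast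
      have h1: "nd (image_mset u c1 + Bs) (Lolli \<phi> \<psi>)" using IT[OF m1 bx_mem] X0 by simp
      have h2: "nd (image_mset u c2 + Bs) \<phi>" using IT[OF m2 bx_mem] X1 by simp
      have "nd ((image_mset u c1 + Bs) + (image_mset u c2 + Bs)) \<psi>" by (rule nd.LolliE[OF h1 h2])
      then have "nd (image_mset u c1 + image_mset u c2 + Bs) \<psi>" by (rule merge2[OF Bs])
      then show ?thesis using sm pe X2 by simp
    next
      case (TI \<phi> \<psi>)
      have X0: "Tensor \<phi> \<psi> \<in> X" using TI by simp
      have X1: "\<phi> \<in> X" by (rule subX(3)[OF X0])
      have X2: "\<psi> \<in> X" by (rule subX(4)[OF X0])
      have pe: "p = fl (Tensor \<phi> \<psi>)" using TI by simp
      have tcA: "mset (map fst TC) = {#bx (fl \<phi>), bx (fl \<psi>)#}" using tc TI by simp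
      obtain c1 c2 where m1: "(bx (fl \<phi>), c1) \<in> set TC" and m2: "(bx (fl \<psi>), c2) \<in> set TC"
        and sm: "sum_list (map snd TC) = c1 + c2" using tc2[OF tcA] by blast
      have h1: "nd (image_mset u c1 + Bs) \<phi>" using IT[OF m1 bx_mem] X1 by simp
      have h2: "nd (image_mset u c2 + Bs) \<psi>" using IT[OF m2 bx_mem] X2 by simp
      have "nd ((image_mset u c1 + Bs) + (image_mset u c2 + Bs)) (Tensor \<phi> \<psi>)" by (rule nd.TensorI[OF h1 h2])
      then have "nd (image_mset u c1 + image_mset u c2 + Bs) (Tensor \<phi> \<psi>)" by (rule merge2[OF Bs])
      then show ?thesis using sm pe X0 by simp
    next
      case (TE \<phi> \<psi>)
      have X0: "Tensor \<phi> \<psi> \<in> X" using TE by simp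
      have X1: "\<phi> \<in> X" by (rule subX(3)[OF X0])
      have X2: "\<psi> \<in> X" by (rule subX(4)[OF X0])
      have tcA: "mset (map fst TC) = {#bx (fl (Tensor \<phi> \<psi>)), {#({#fl \<phi>, fl \<psi>#}, p)#}#}" using tc TE by simp
      obtain c1 c2 where m1: "(bx (fl (Tensor \<phi> \<psi>)), c1) \<in> set TC" and m2: "({#({#fl \<phi>, fl \<psi>#}, p)#}, c2) \<in> set TC"
        and sm: "sum_list (map snd TC) = c1 + c2" using tc2[OF tcA] by blast
      have h1: "nd (image_mset u c1 + Bs) (Tensor \<phi> \<psi>)" using IT[OF m1 bx_mem] X0 by simp
      have "nd (image_mset u c2 + image_mset u {#fl \<phi>, fl \<psi>#} + Bs) (u p)" using IT[OF m2] by simp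
      then have h2: "nd ((image_mset u c2 + Bs) + {#\<phi>, \<psi>#}) (u p)" using X1 X2 by (simp add: ac_simps)
      have "nd ((image_mset u c1 + Bs) + (image_mset u c2 + Bs)) (u p)" by (rule nd.TensorE[OF h1 h2])
      then have "nd (image_mset u c1 + image_mset u c2 + Bs) (u p)" by (rule merge2[OF Bs])
      then show ?thesis using sm by simp
    next
      case OI
      have X0: "One \<in> X" using OI by simp
      have pe: "p = fl One" using OI by simp
      have TC: "TC = []" using tc OI by simp
      have "nd ({#} + Bs) One" by (rule wkB[OF Bs nd.OneI])
      then show ?thesis using TC pe X0 by simp
    next
      case OE
      have X0: "One \<in> X" using OE by simp
      have tcA: "mset (map fst TC) = {#bx (fl One), bx p#}" using tc OE by simp
      obtain c1 c2 where m1: "(bx (fl One), c1) \<in> set TC" and m2: "(bx p, c2) \<in> set TC"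
        and sm: "sum_list (map snd TC) = c1 + c2" using tc2[OF tcA] by blast
      have h1: "nd (image_mset u c1 + Bs) One" using IT[OF m1 bx_mem] X0 by simp
      have h2: "nd (image_mset u c2 + Bs) (u p)" using IT[OF m2 bx_mem] by simp
      have "nd ((image_mset u c1 + Bs) + (image_mset u c2 + Bs)) (u p)" by (rule nd.OneE[OF h1 h2])
      then have "nd (image_mset u c1 + image_mset u c2 + Bs) (u p)" by (rule merge2[OF Bs])
      then show ?thesis using sm by simp
    next
      case (WI \<phi> \<psi>)
      have X0: "With \<phi> \<psi> \<in> X" using WI by simp
      have X1: "\<phi> \<in> X" by (rule subX(5)[OF X0])
      have X2: "\<psi> \<in> X" by (rule subX(6)[OF X0])
      have pe: "p = fl (With \<phi> \<psi>)" using WI by simp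
      have tcA: "mset (map fst TC) = {#{#({#}, fl \<phi>), ({#}, fl \<psi>)#}#}" using tc WI by simp
      obtain c where TC: "TC = [({#({#}, fl \<phi>), ({#}, fl \<psi>)#}, c)]" using tc1[OF tcA] by blast
      have h1: "nd (image_mset u c + Bs) \<phi>" using IT[of _ c "{#}" "fl \<phi>"] TC X1 by simp
      have h2: "nd (image_mset u c + Bs) \<psi>" using IT[of _ c "{#}" "fl \<psi>"] TC X2 by simp
      have "nd (image_mset u c + Bs) (With \<phi> \<psi>)" by (rule nd.WithI[OF h1 h2])
      then show ?thesis using TC pe X0 by simp
    next
      case (WE1 \<phi> \<psi>)
      have X0: "With \<phi> \<psi> \<in> X" using WE1 by simp
      have X1: "\<phi> \<in> X" by (rule subX(5)[OF X0])
      have pe: "p = fl \<phi>" using WE1 by simp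
      have tcA: "mset (map fst TC) = {#bx (fl (With \<phi> \<psi>))#}" using tc WE1 by simp
      obtain c where TC: "TC = [(bx (fl (With \<phi> \<psi>)), c)]" using tc1[OF tcA] by blast
      have mem1: "(bx (fl (With \<phi> \<psi>)), c) \<in> set TC" using TC by simp
      have h1: "nd (image_mset u c + Bs) (With \<phi> \<psi>)" using IT[OF mem1 bx_mem] X0 by simp
      have "nd (image_mset u c + Bs) \<phi>" by (rule nd.WithE1[OF h1])
      then show ?thesis using TC pe X1 by simp
    next
      case (WE2 \<phi> \<psi>)
      have X0: "With \<phi> \<psi> \<in> X" using WE2 by simp
      have X2: "\<psi> \<in> X" by (rule subX(6)[OF X0])
      have pe: "p = fl \<psi>" using WE2 by simp
      have tcA: "mset (map fst TC) = {#bx (fl (With \<phi> \<psi>))#}" using tc WE2 by simp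
      obtain c where TC: "TC = [(bx (fl (With \<phi> \<psi>)), c)]" using tc1[OF tcA] by blast
      have mem1: "(bx (fl (With \<phi> \<psi>)), c) \<in> set TC" using TC by simp
      have h1: "nd (image_mset u c + Bs) (With \<phi> \<psi>)" using IT[OF mem1 bx_mem] X0 by simp
      have "nd (image_mset u c + Bs) \<psi>" by (rule nd.WithE2[OF h1])
      then show ?thesis using TC pe X2 by simp
    next
      case (PI1 \<phi> \<psi>)
      have X0: "Plus \<phi> \<psi> \<in> X" using PI1 by simp
      have X1: "\<phi> \<in> X" by (rule subX(7)[OF X0])
      have pe: "p = fl (Plus \<phi> \<psi>)" using PI1 by simp
      have tcA: "mset (map fst TC) = {#bx (fl \<phi>)#}" using tc PI1 by simp
      obtain c where TC: "TC = [(bx (fl \<phi>), c)]" using tc1[OF tcA] by blast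
      have mem1: "(bx (fl \<phi>), c) \<in> set TC" using TC by simp
      have h1: "nd (image_mset u c + Bs) \<phi>" using IT[OF mem1 bx_mem] X1 by simp
      have "nd (image_mset u c + Bs) (Plus \<phi> \<psi>)" by (rule nd.PlusI1[OF h1])
      then show ?thesis using TC pe X0 by simp
    next
      case (PI2 \<phi> \<psi>)
      have X0: "Plus \<phi> \<psi> \<in> X" using PI2 by simp
      have X2: "\<psi> \<in> X" by (rule subX(8)[OF X0])
      have pe: "p = fl (Plus \<phi> \<psi>)" using PI2 by simp
      have tcA: "mset (map fst TC) = {#bx (fl \<psi>)#}" using tc PI2 by simp
      obtain c where TC: "TC = [(bx (fl \<psi>), c)]" using tc1[OF tcA] by blast
      have mem1: "(bx (fl \<psi>), c) \<in> set TC" using TC by simp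
      have h1: "nd (image_mset u c + Bs) \<psi>" using IT[OF mem1 bx_mem] X2 by simp
      have "nd (image_mset u c + Bs) (Plus \<phi> \<psi>)" by (rule nd.PlusI2[OF h1])
      then show ?thesis using TC pe X0 by simp
    next
      case (PE \<phi> \<psi>)
      have X0: "Plus \<phi> \<psi> \<in> X" using PE by simp
      have X1: "\<phi> \<in> X" by (rule subX(7)[OF X0])
      have X2: "\<psi> \<in> X" by (rule subX(8)[OF X0])
      have tcA: "mset (map fst TC) = {#bx (fl (Plus \<phi> \<psi>)), {#({#fl \<phi>#}, p), ({#fl \<psi>#}, p)#}#}" using tc PE by simp
      obtain c1 c2 where m1: "(bx (fl (Plus \<phi> \<psi>)), c1) \<in> set TC"
        and m2: "({#({#fl \<phi>#}, p), ({#fl \<psi>#}, p)#}, c2) \<in> set TC"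
        and sm: "sum_list (map snd TC) = c1 + c2" using tc2[OF tcA] by blast
      have h1: "nd (image_mset u c1 + Bs) (Plus \<phi> \<psi>)" using IT[OF m1 bx_mem] X0 by simp
      have "nd (image_mset u c2 + image_mset u {#fl \<phi>#} + Bs) (u p)" using IT[OF m2, of "{#fl \<phi>#}" p] by simp
      then have h2: "nd (add_mset \<phi> (image_mset u c2 + Bs)) (u p)" using X1 by simp
      have "nd (image_mset u c2 + image_mset u {#fl \<psi>#} + Bs) (u p)" using IT[OF m2, of "{#fl \<psi>#}" p] by simp
      then have h3: "nd (add_mset \<psi> (image_mset u c2 + Bs)) (u p)" using X2 by simp
      have "nd ((image_mset u c1 + Bs) + (image_mset u c2 + Bs)) (u p)" by (rule nd.PlusE[OF h1 h2 h3])
      then have "nd (image_mset u c1 + image_mset u c2 + Bs) (u p)" by (rule merge2[OF Bs])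
      then show ?thesis using sm by simp
    next
      case (TopI Q)
      have X0: "Top \<in> X" using TopI by simp
      have pe: "p = fl Top" using TopI by simp
      have "nd (image_mset u (sum_list (map snd TC)) + Bs) Top" by (rule nd_top)
      then show ?thesis using pe X0 by simp
    next
      case (ZE Q)
      have X0: "Zero \<in> X" using ZE by simp
      have tcA: "mset (map fst TC) = add_mset (bx (fl Zero)) (image_mset bx Q)" using tc ZE by simp
      obtain c rest where m1: "(bx (fl Zero), c) \<in> set TC" and sm: "sum_list (map snd TC) = c + rest"
        using tcZ[OF tcA] by blast
      have h1: "nd (image_mset u c + Bs) Zero" using IT[OF m1 bx_mem] X0 by simp
      have "nd (image_mset u rest + (image_mset u c + Bs)) (u p)" by (rule nd_zero[OF h1])
      then show ?thesis using sm by (simp add: ac_simps)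
    next
      case (BP \<phi>)
      then show ?thesis by simp
    next
      case (BD \<phi>)
      have X0: "Bang \<phi> \<in> X" using BD by simp
      have X1: "\<phi> \<in> X" by (rule subX(9)[OF X0])
      have tcA: "mset (map fst TC) = {#bx (fl (Bang \<phi>)), {#({#fl \<phi>#}, p)#}#}" using tc BD by simp
      obtain c1 c2 where m1: "(bx (fl (Bang \<phi>)), c1) \<in> set TC" and m2: "({#({#fl \<phi>#}, p)#}, c2) \<in> set TC"
        and sm: "sum_list (map snd TC) = c1 + c2" using tc2[OF tcA] by blast
      have h1: "nd (image_mset u c1 + Bs) (Bang \<phi>)" using IT[OF m1 bx_mem] X0 by simp
      have "nd (image_mset u c2 + image_mset u {#fl \<phi>#} + Bs) (u p)" using IT[OF m2] by simp
      then have h2: "nd (add_mset \<phi> (image_mset u c2 + Bs)) (u p)" using X1 by simp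
      have "nd ((image_mset u c1 + Bs) + (image_mset u c2 + Bs)) (u p)" by (rule nd.Der[OF h1 h2])
      then have "nd (image_mset u c1 + image_mset u c2 + Bs) (u p)" by (rule merge2[OF Bs])
      then show ?thesis using sm by simp
    next
      case (BW \<phi>)
      have X0: "Bang \<phi> \<in> X" using BW by simp
      have tcA: "mset (map fst TC) = {#bx (fl (Bang \<phi>)), bx p#}" using tc BW by simp
      obtain c1 c2 where m1: "(bx (fl (Bang \<phi>)), c1) \<in> set TC" and m2: "(bx p, c2) \<in> set TC"
        and sm: "sum_list (map snd TC) = c1 + c2" using tc2[OF tcA] by blast
      have h1: "nd (image_mset u c1 + Bs) (Bang \<phi>)" using IT[OF m1 bx_mem] X0 by simp
      have h2: "nd (image_mset u c2 + Bs) (u p)" using IT[OF m2 bx_mem] by simp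
      have "nd ((image_mset u c1 + Bs) + (image_mset u c2 + Bs)) (u p)" by (rule nd.Wk[OF h1 h2])
      then have "nd (image_mset u c1 + image_mset u c2 + Bs) (u p)" by (rule merge2[OF Bs])
      then show ?thesis using sm by simp
    next
      case (BC \<phi>)
      have X0: "Bang \<phi> \<in> X" using BC by simp
      have tcA: "mset (map fst TC) = {#bx (fl (Bang \<phi>)), {#({#fl (Bang \<phi>), fl (Bang \<phi>)#}, p)#}#}" using tc BC by simp
      obtain c1 c2 where m1: "(bx (fl (Bang \<phi>)), c1) \<in> set TC"
        and m2: "({#({#fl (Bang \<phi>), fl (Bang \<phi>)#}, p)#}, c2) \<in> set TC"
        and sm: "sum_list (map snd TC) = c1 + c2" using tc2[OF tcA] by blast
      have h1: "nd (image_mset u c1 + Bs) (Bang \<phi>)" using IT[OF m1 bx_mem] X0 by simp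
      have "nd (image_mset u c2 + image_mset u {#fl (Bang \<phi>), fl (Bang \<phi>)#} + Bs) (u p)" using IT[OF m2] by simp
      then have h2: "nd ((image_mset u c2 + Bs) + {#Bang \<phi>, Bang \<phi>#}) (u p)" using X0 by (simp add: ac_simps)
      have "nd ((image_mset u c1 + Bs) + (image_mset u c2 + Bs)) (u p)" by (rule nd.Ctr[OF h1 h2])
      then have "nd (image_mset u c1 + image_mset u c2 + Bs) (u p)" by (rule merge2[OF Bs])
      then show ?thesis using sm by simp
    qed
  qed
qed

lemma backtr:
  assumes Bs: "\<forall>\<beta>\<in>#Bs. isbang \<beta>" and BX: "\<forall>\<delta>. Bang \<delta> \<in># Bs \<longrightarrow> Bang \<delta> \<in> X"
  shows "aderiv (NB fl X \<union> EB Bs) L p \<Longrightarrow> nd (image_mset u L + Bs) (u p)"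
proof (induction rule: aderiv.induct)
  case (Ref q)
  have "nd {#u q#} (u q)" by (rule nd.Ax)
  then have "nd ({#u q#} + Bs) (u q)" by (rule wkB[OF Bs])
  then show ?case by simp
next
  case (App A S p TC DC)
  have IT: "\<And>T c Q q. (T, c) \<in> set TC \<Longrightarrow> (Q, q) \<in># T \<Longrightarrow> nd (image_mset u c + image_mset u Q + Bs) (u q)"
  proof -
    fix T c Q q assume a: "(T, c) \<in> set TC" "(Q, q) \<in># T"
    have "\<forall>y\<in>#fst (T, c). aderiv (NB fl X \<union> EB Bs) (snd (T, c) + fst y) (snd y) \<and>
        nd (image_mset u (snd (T, c) + fst y) + Bs) (u (snd y))" by (rule bspec[OF App(4) a(1)])
    then have "\<forall>y\<in>#T. aderiv (NB fl X \<union> EB Bs) (c + fst y) (snd y) \<and>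
        nd (image_mset u (c + fst y) + Bs) (u (snd y))" by simp
    from bspec[OF this a(2)] show "nd (image_mset u c + image_mset u Q + Bs) (u q)" by simp
  qed
  have PD: "\<forall>x\<in>set DC. nd (image_mset u (snd x) + Bs) (u (fst x)) \<and> isbang (u (fst x))"
  proof
    fix x assume x: "x \<in> set DC"
    from bspec[OF App(5) x] have h: "nd (image_mset u (snd x) + Bs) (u (fst x))" by simp
    from bspec[OF App(3) x] have "persistent (NB fl X \<union> EB Bs) (fst x)" .
    then obtain \<psi> where "Bang \<psi> \<in> X" "fst x = fl (Bang \<psi>)" using pers_char by blast
    then have "isbang (u (fst x))" by simp
    with h show "nd (image_mset u (snd x) + Bs) (u (fst x)) \<and> isbang (u (fst x))" by simp
  qed
  show ?case
  proof (cases "S = {#}")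
    case True
    have r: "(A, {#}, p) \<in> NB fl X \<union> EB Bs" using App(1) True by simp
    have c: "nd (image_mset u (sum_list (map snd TC)) + Bs) (u p)" by (rule core[OF Bs BX r App(2) IT])
    have "nd (image_mset u (sum_list (map snd TC)) + image_mset u (sum_list (map snd DC)) + Bs) (u p)"
      by (rule discard[OF Bs c PD])
    then show ?thesis by simp
  next
    case False
    obtain \<phi> where \<phi>: "Bang \<phi> \<in> X" "A = {#}" "S = {#({#}, fl \<phi>)#}" "p = fl (Bang \<phi>)"
      using rule_S[OF App(1) False] by blast
    have \<phi>X: "\<phi> \<in> X" by (rule subX(9)[OF \<phi>(1)])
    have TC: "TC = []" using App(2) \<phi>(2) by simp
    have "({#}, fl \<phi>) \<in># S" using \<phi>(3) by simp
    from bspec[OF App(6) this] have hS: "nd (image_mset u (mset (map fst DC)) + Bs) \<phi>" using \<phi>X by simp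
    obtain bl where bl: "mset bl = Bs" using ex_mset by blast
    define ps where "ps = map (\<lambda>d. (image_mset u (snd d) + Bs, unb (u (fst d)))) DC @ map (\<lambda>\<beta>. ({#\<beta>#}, unb \<beta>)) bl"
    have P1: "\<forall>x\<in>set ps. nd (fst x) (Bang (snd x))"
    proof
      fix x assume "x \<in> set ps"
      then consider (a) d where "d \<in> set DC" "x = (image_mset u (snd d) + Bs, unb (u (fst d)))"
        | (b) \<beta> where "\<beta> \<in> set bl" "x = ({#\<beta>#}, unb \<beta>)" unfolding ps_def by auto
      then show "nd (fst x) (Bang (snd x))"
      proof cases
        case a
        have "nd (image_mset u (snd d) + Bs) (u (fst d)) \<and> isbang (u (fst d))" by (rule bspec[OF PD a(1)])
        then show ?thesis using a(2) by (simp add: unb_bang)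
      next
        case b
        then have "isbang \<beta>" using Bs bl by auto
        then show ?thesis using b by (simp add: unb_bang nd.Ax)
      qed
    qed
    have e1: "map (\<lambda>d. Bang (unb (u (fst d)))) DC = map (\<lambda>d. u (fst d)) DC"
    proof (rule map_cong[OF refl])
      fix d assume "d \<in> set DC"
      then have "isbang (u (fst d))" using PD by blast
      then show "Bang (unb (u (fst d))) = u (fst d)" by (rule unb_bang)
    qed
    have e2: "map (\<lambda>\<beta>. Bang (unb \<beta>)) bl = bl"
    proof (rule map_idI)
      fix \<beta> assume "\<beta> \<in> set bl"
      then have "isbang \<beta>" using Bs bl by auto
      then show "Bang (unb \<beta>) = \<beta>" by (rule unb_bang)
    qed
    have m: "mset (map (\<lambda>x. Bang (snd x)) ps) = image_mset u (mset (map fst DC)) + Bs"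
    proof -
      have "mset (map (\<lambda>x. Bang (snd x)) ps) = mset (map (\<lambda>d. Bang (unb (u (fst d)))) DC) + mset (map (\<lambda>\<beta>. Bang (unb \<beta>)) bl)"
        by (simp add: ps_def comp_def)
      also have "\<dots> = mset (map (\<lambda>d. u (fst d)) DC) + mset bl" by (simp only: e1 e2)
      also have "\<dots> = image_mset u (mset (map fst DC)) + Bs" using bl by (simp add: multiset.map_comp comp_def)
      finally show ?thesis .
    qed
    have P2: "nd (mset (map (\<lambda>x. Bang (snd x)) ps)) \<phi>" using hS unfolding m .
    have pr: "nd (sum_list (map fst ps)) (Bang \<phi>)" by (rule nd.Prom[OF P1 P2])
    have "sum_list (map fst ps) = sum_list (map (\<lambda>d. image_mset u (snd d) + Bs) DC) + sum_list (map (\<lambda>\<beta>. {#\<beta>#}) bl)"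
      by (simp add: ps_def comp_def)
    also have "\<dots> = sum_list (map (\<lambda>d. image_mset u (snd d)) DC) + repeat_mset (length DC) Bs + Bs"
      using bl by (simp add: sum_list_plusM sum_list_single)
    also have "\<dots> = image_mset u (sum_list (map snd DC)) + repeat_mset (length DC) Bs + Bs"
      by (simp add: image_mset_sum_list comp_def)
    finally have sps: "sum_list (map fst ps) = image_mset u (sum_list (map snd DC)) + repeat_mset (length DC) Bs + Bs" .
    have "nd (image_mset u (sum_list (map snd DC)) + repeat_mset (length DC) Bs + Bs) (Bang \<phi>)"
      using pr unfolding sps .
    then have "nd (image_mset u (sum_list (map snd DC)) + Bs) (Bang \<phi>)" by (rule ctr_repB[OF Bs])
    then show ?thesis using TC \<phi>(4) \<phi>(1) by simp
  qed
qed

end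

fun atm_of :: "'a form \<Rightarrow> 'a option" where
  "atm_of (Atom q) = Some q"
| "atm_of _ = None"

lemma atm_of_Some: "atm_of \<chi> = Some q \<Longrightarrow> \<chi> = Atom q" by (cases \<chi>) auto

lemma sub_trans: "\<psi> \<in> sub \<chi> \<Longrightarrow> sub \<psi> \<subseteq> sub \<chi>" by (induction \<chi>) auto

lemma enc_exists:
  assumes inf: "infinite (UNIV :: 'a set)" and fin: "finite (X :: 'a form set)"
    and cl: "\<And>\<chi>. \<chi> \<in> X \<Longrightarrow> sub \<chi> \<subseteq> X"
  shows "\<exists>fl. enc fl X"
proof -
  define At where "At = {q. Atom q \<in> X}"
  have "At = Atom -` X" by (auto simp: At_def)
  then have finAt: "finite At" using finite_vimageI[OF fin, of Atom] by (simp add: inj_on_def)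
  define NA where "NA = {\<chi> \<in> X. atm_of \<chi> = None}"
  have finNA: "finite NA" using fin by (simp add: NA_def)
  have infR: "infinite (UNIV - At)" using inf finAt by simp
  obtain S where S: "finite S" "card S = card NA" "S \<subseteq> UNIV - At"
    using infinite_arbitrarily_large[OF infR] by blast
  obtain g where g: "g ` NA \<subseteq> S" "inj_on g NA" using card_le_inj[OF finNA S(1)] S(2) by auto
  define fl where "fl \<chi> = (case atm_of \<chi> of Some q \<Rightarrow> q | None \<Rightarrow> g \<chi>)" for \<chi>
  have gA: "\<And>x. x \<in> NA \<Longrightarrow> g x \<notin> At" using g(1) S(3) by blast
  have "enc fl X"
  proof
    show "\<And>\<chi>. \<chi> \<in> X \<Longrightarrow> sub \<chi> \<subseteq> X" by (rule cl)
    show "\<And>q. Atom q \<in> X \<Longrightarrow> fl (Atom q) = q" by (simp add: fl_def)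
    show "inj_on fl X"
    proof (rule inj_onI)
      fix x y assume x: "x \<in> X" and y: "y \<in> X" and e: "fl x = fl y"
      show "x = y"
      proof (cases "atm_of x")
        case None
        then have xN: "x \<in> NA" using x by (simp add: NA_def)
        have fx: "fl x = g x" using None by (simp add: fl_def)
        show ?thesis
        proof (cases "atm_of y")
          case None
          then have yN: "y \<in> NA" using y by (simp add: NA_def)
          have "g x = g y" using e fx None by (simp add: fl_def)
          then show ?thesis using g(2) xN yN by (simp add: inj_on_def)
        next
          case (Some q)
          then have "y = Atom q" by (rule atm_of_Some)
          then have "q \<in> At" "fl y = q" using y by (auto simp: At_def fl_def)
          then show ?thesis using e fx gA[OF xN] by simp
        qed
      next
        case (Some q)
        then have xq: "x = Atom q" by (rule atm_of_Some)
        then have qA: "q \<in> At" and fx: "fl x = q" using x by (auto simp: At_def fl_def)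
        show ?thesis
        proof (cases "atm_of y")
          case None
          then have yN: "y \<in> NA" using y by (simp add: NA_def)
          have "fl y = g y" using None by (simp add: fl_def)
          then show ?thesis using e fx qA gA[OF yN] by simp
        next
          case (Some r)
          then have "y = Atom r" by (rule atm_of_Some)
          then show ?thesis using e xq by (simp add: fl_def)
        qed
      qed
    qed
  qed
  thus ?thesis by blast
qed

lemma sum_ks: "sum_list (map (\<lambda>g. if isbang g then {#} else {#f g#}) gs) =
  image_mset f (filter_mset (\<lambda>x. \<not> isbang x) (mset gs))"
  by (induction gs) auto

theorem theorem7:
  fixes \<Gamma> :: "'a form multiset" and \<phi> :: "'a form"
  assumes "infinite (UNIV :: 'a set)"
    and "valid \<Gamma> \<phi>"
  shows "nd \<Gamma> \<phi>"
proof -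
  define X where "X = sub \<phi> \<union> (\<Union>\<chi>\<in>set_mset \<Gamma>. sub \<chi>)"
  have fin: "finite X" unfolding X_def by (simp add: finite_sub)
  have cl: "\<And>\<chi>. \<chi> \<in> X \<Longrightarrow> sub \<chi> \<subseteq> X" unfolding X_def using sub_trans by blast
  obtain fl where E: "enc fl X" using enc_exists[OF assms(1) fin cl] by blast
  interpret enc fl X by (rule E)
  define Bs where "Bs = filter_mset isbang \<Gamma>"
  define G' where "G' = filter_mset (\<lambda>x. \<not> isbang x) \<Gamma>"
  have Bs: "\<forall>\<beta>\<in>#Bs. isbang \<beta>" by (simp add: Bs_def)
  have GX: "\<And>\<chi>. \<chi> \<in># \<Gamma> \<Longrightarrow> \<chi> \<in> X" unfolding X_def using self_sub by blast
  have BX: "\<forall>\<delta>. Bang \<delta> \<in># Bs \<longrightarrow> Bang \<delta> \<in> X" using GX by (simp add: Bs_def)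
  have \<phi>X: "\<phi> \<in> X" unfolding X_def using self_sub by blast
  define B0 where "B0 = NB fl X \<union> EB Bs"
  have NB0: "NB fl X \<subseteq> B0" by (simp add: B0_def)
  have va: "ante_supp B0 \<Gamma> {#} \<phi>" using assms(2) unfolding valid_def by blast
  have ad: "aderiv B0 (image_mset fl G') (fl \<phi>)"
  proof (cases "\<Gamma> = {#}")
    case True
    have "supp B0 {#} \<phi>" using va True unfolding ante_supp_def by simp
    then have "aderiv B0 {#} (fl \<phi>)" using equiv[OF \<phi>X NB0] by simp
    then show ?thesis using True by (simp add: G'_def)
  next
    case False
    obtain gs where gs: "mset gs = \<Gamma>" using ex_mset by blast
    define ks where "ks = map (\<lambda>g. (g, if isbang g then {#} else {#fl g#})) gs"
    have pcs: "\<forall>x\<in>set ks. piece B0 (fst x) (snd x)"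
    proof
      fix x assume "x \<in> set ks"
      then obtain g where g: "g \<in> set gs" "x = (g, if isbang g then {#} else {#fl g#})"
        unfolding ks_def by auto
      have gX: "g \<in> X" using GX g(1) gs by auto
      show "piece B0 (fst x) (snd x)"
      proof (cases "isbang g")
        case True
        then obtain \<delta> where \<delta>: "g = Bang \<delta>" by (auto elim: isbangE)
        have \<delta>X: "\<delta> \<in> X" using gX \<delta> subX(9) by blast
        have "Bang \<delta> \<in># Bs" using g(1) gs \<delta> by (auto simp: Bs_def)
        then have "({#}, {#}, fl \<delta>) \<in> B0" by (auto simp: B0_def EB_def)
        then have "aderiv B0 {#} (fl \<delta>)" by (rule app0)
        then have "supp B0 {#} \<delta>" using equiv[OF \<delta>X NB0] by simp
        then show ?thesis using g(2) \<delta> by (simp add: piece_b)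
      next
        case False
        have "aderiv B0 {#fl g#} (fl g)" by (rule aderiv.Ref)
        then have "supp B0 {#fl g#} g" using equiv[OF gX NB0] by simp
        then show ?thesis using g(2) False by (simp add: piece_nb)
      qed
    qed
    have mk: "mset (map fst ks) = \<Gamma>" using gs by (simp add: ks_def comp_def)
    have all: "\<forall>C ks. B0 \<subseteq> C \<longrightarrow> mset (map fst ks) = \<Gamma> \<longrightarrow>
              (\<forall>x\<in>set ks. piece C (fst x) (snd x)) \<longrightarrow>
              supp C ({#} + sum_list (map snd ks)) \<phi>"
      using va False unfolding ante_supp_def by simp
    have "supp B0 ({#} + sum_list (map snd ks)) \<phi>" using all mk pcs by blast
    moreover have "sum_list (map snd ks) = image_mset fl G'"
      using gs sum_ks[of fl gs] by (simp add: ks_def comp_def G'_def)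
    ultimately have "supp B0 (image_mset fl G') \<phi>" by simp
    then show ?thesis using equiv[OF \<phi>X NB0] by simp
  qed
  have "nd (image_mset u (image_mset fl G') + Bs) (u (fl \<phi>))"
    using backtr[OF Bs BX] ad unfolding B0_def by blast
  moreover have "image_mset u (image_mset fl G') = G'"
  proof -
    have "image_mset (u \<circ> fl) G' = image_mset id G'"
    proof (rule image_mset_cong)
      fix x assume "x \<in># G'"
      then have "x \<in> X" using GX by (simp add: G'_def)
      then show "(u \<circ> fl) x = id x" by simp
    qed
    then show ?thesis by (simp add: multiset.map_comp)
  qed
  moreover have "G' + Bs = \<Gamma>" using multiset_partition[of \<Gamma> isbang] by (simp add: G'_def Bs_def add.commute)
  ultimately show ?thesis using \<phi>X by simp
qed

end
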